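(* Assume (A1)–(A3), (B') and (C). (i) For every $n\ge3$, all $u_i,v_i\in\mathbf h$ and $\epsilon_i\in\mathbb Z_2$, $\lim_{t\to0}\frac1t\langle\Omega,(U^{(\epsilon_1)}_t-1)(u_1,v_1)\cdots(U^{(\epsilon_n)}_t-1)(u_n,v_n)\Omega\rangle=0$. (ii) For $u\in\mathbf h$, $v\in\mathcal D(G)$, product vectors $\underline p,\underline w\in\mathbf h^{\otimes n}$, $\epsilon\in\mathbb Z_2$, $\underline\epsilon'\in\mathbb Z_2^n$: $\lim_{t\to0}\frac1t\langle(U^{(\epsilon)}_t-1)(u,v)\Omega,(U^{(\underline\epsilon')}_t-1)(\underline p,\underline w)\Omega\rangle=(-1)^\epsilon\lim_{t\to0}\frac1t\langle(U_t-1)(u,v)\Omega,(U^{(\underline\epsilon')}_t-1)(\underline p,\underline w)\Omega\rangle$ (meaning: one side exists iff the other does, and they are then equal).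
   Context: All Hilbert spaces are complex and separable, with inner products antilinear in the first variable. Let $\mathbf h,\mathcal H$ be Hilbert spaces and $\Omega\in\mathcal H$ a fixed unit vector. For $A\in\mathcal B(\mathbf h\otimes\mathcal H)$ and $u,v\in\mathbf h$, the operator $A(u,v)\in\mathcal B(\mathcal H)$ is defined by $\langle\xi_1,A(u,v)\xi_2\rangle=\langle u\otimes\xi_1,A\,(v\otimes\xi_2)\rangle$ for all $\xi_1,\xi_2\in\mathcal H$; the same definition is used with $\mathbf h$ replaced by $\mathbf h^{\otimes n}$. Let $\{U_{s,t}:0\le s\le t<\infty\}$ be unitary operators on $\mathbf h\otimes\mathcal H$, $U_t:=U_{0,t}$, $U^{(0)}_{s,t}:=U_{s,t}$, $U^{(1)}_{s,t}:=U_{s,t}^*$. For $n\ge1$, $1\le k\le n$, $\epsilon\in\mathbb Z_2=\{0,1\}$, let $U^{(n,\epsilon)}_{s,t;k}$ be the operator on $\mathbf h^{\otimes n}\otimes\mathcal H$ acting as $U^{(\epsilon)}_{s,t}$ on (the $k$-th copy of $\mathbf h$)$\otimes\mathcal H$ and as the identity on the other copies of $\mathbf h$. For $\underline\epsilon\in\mathbb Z_2^n$ and $0\le s_1\le t_1\le s_2\le\dots\le s_n\le t_n$ put $U^{(\underline\epsilon)}_{\underline s,\underline t}:=U^{(n,\epsilon_1)}_{s_1,t_1;1}\cdots U^{(n,\epsilon_n)}_{s_n,t_n;n}$, so that for product vectors $\underline u=\otimes_iu_i$, $\underline v=\otimes_iv_i$ one has $U^{(\underline\epsilon)}_{\underline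 s,\underline t}(\underline u,\underline v)=\prod_{k=1}^nU^{(\epsilon_k)}_{s_k,t_k}(u_k,v_k)$ (ordered product). Write $U^{(\underline\epsilon)}_{s,t}$ when all $s_k=s$, $t_k=t$, and $U^{(n)}_t$ when moreover $s=0$, $\underline\epsilon=\underline0$. Assumptions: (A1) $U_{r,s}U_{s,t}=U_{r,t}$ for $r\le s\le t$. (A2) If $[s_1,t_1)\cap[s_2,t_2)=\emptyset$ then (i) $U_{s_1,t_1}(u_1,v_1)$ commutes with $U_{s_2,t_2}(u_2,v_2)$ and $U_{s_2,t_2}(u_2,v_2)^*$ for all $u_i,v_i\in\mathbf h$; (ii) for time tuples $\underline a,\underline b$ with $s_1\le a_1\le b_1\le\dots\le a_n\le b_n\le t_1$ and $\underline q,\underline r$ with $s_2\le q_1\le r_1\le\dots\le q_m\le r_m\le t_2$, product vectors $\underline u,\underline v\in\mathbf h^{\otimes n}$, $\underline p,\underline w\in\mathbf h^{\otimes m}$, and $\underline\epsilon\in\mathbb Z_2^n,\underline\epsilon'\in\mathbb Z_2^m$: $\langle\Omega,U^{(\underline\epsilon)}_{\underline a,\underline b}(\underline u,\underline v)U^{(\underline\epsilon')}_{\underline q,\underline r}(\underline p,\underline w)\Omega\rangle=\langle\Omega,U^{(\underline\epsilon)}_{\underline a,\underline b}(\underline u,\underline v)\Omega\rangle\langle\Omega,U^{(\underline\epsilon')}_{\underline q,\underline r}(\underline p,\underline w)\Omega\rangle$. (A3) $\langle\Omega,U^{(\underline\epsilon)}_{s,t}(\underline u,\underline v)\Omega\rangle=\langle\Omega,U^{(\underline\epsilon)}_{0,t-s}(\underline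 u,\underline v)\Omega\rangle$. (B') $\lim_{t\to0}\langle\Omega,(U_t-1)(u,v)\Omega\rangle=0$ for all $u,v\in\mathbf h$. (C) For all $u_i,v_i\in\mathbf h$, $\epsilon_i\in\mathbb Z_2$ ($i=1,2,3$): $\lim_{t\to0}\frac1t\langle\Omega,(U^{(\epsilon_1)}_t-1)(u_1,v_1)(U^{(\epsilon_2)}_t-1)(u_2,v_2)(U^{(\epsilon_3)}_t-1)(u_3,v_3)\Omega\rangle=0$. $T_t$ is the operator on $\mathbf h$ with $\langle u,T_tv\rangle=\langle\Omega,U_t(u,v)\Omega\rangle$; it is a strongly continuous contraction semigroup and $G$ denotes its generator, with domain $\mathcal D(G)$. *)

theory Defs
  imports "HOL-Analysis.Analysis"
begin

text \<open>Concrete model of separable complex Hilbert spaces: l2 over a countable index type.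
  h = l2('a), H = l2('b), the tensor product h \<otimes> H = l2('a \<times> 'b).
  Inner products are antilinear in the first variable.\<close>

definition l2 :: "('i \<Rightarrow> complex) set" where
  "l2 = {f. (\<lambda>i. (cmod (f i))\<^sup>2) summable_on UNIV}"

definition l2_inner :: "('i \<Rightarrow> complex) \<Rightarrow> ('i \<Rightarrow> complex) \<Rightarrow> complex" where
  "l2_inner f g = (\<Sum>\<^sub>\<infinity>i. cnj (f i) * g i)"

definition l2_norm :: "('i \<Rightarrow> complex) \<Rightarrow> real" where
  "l2_norm f = sqrt (\<Sum>\<^sub>\<infinity>i. (cmod (f i))\<^sup>2)"

text \<open>Bounded (complex-linear) operators on l2 (only their action on l2 matters).\<close>
definition bdd_op :: "(('i \<Rightarrow> complex) \<Rightarrow> ('j \<Rightarrow> complex)) \<Rightarrow> bool" where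
  "bdd_op A \<longleftrightarrow>
     (\<forall>f\<in>l2. A f \<in> l2) \<and>
     (\<forall>f\<in>l2. \<forall>g\<in>l2. A (\<lambda>i. f i + g i) = (\<lambda>j. A f j + A g j)) \<and>
     (\<forall>f\<in>l2. \<forall>c. A (\<lambda>i. c * f i) = (\<lambda>j. c * A f j)) \<and>
     (\<exists>C. \<forall>f\<in>l2. l2_norm (A f) \<le> C * l2_norm f)"

definition unitary_op :: "(('i \<Rightarrow> complex) \<Rightarrow> ('i \<Rightarrow> complex)) \<Rightarrow> bool" where
  "unitary_op A \<longleftrightarrow> bdd_op A \<and> A ` l2 = l2 \<and>
     (\<forall>f\<in>l2. \<forall>g\<in>l2. l2_inner (A f) (A g) = l2_inner f g)"

definition adjoint_op :: "(('i \<Rightarrow> complex) \<Rightarrow> ('i \<Rightarrow> complex)) \<Rightarrow> (('i \<Rightarrow> complex) \<Rightarrow> ('i \<Rightarrow> complex))" where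
  "adjoint_op A = (SOME B. bdd_op B \<and> (\<forall>f\<in>l2. \<forall>g\<in>l2. l2_inner (B f) g = l2_inner f (A g)))"

definition tensor :: "('a \<Rightarrow> complex) \<Rightarrow> ('b \<Rightarrow> complex) \<Rightarrow> ('a \<times> 'b \<Rightarrow> complex)" where
  "tensor u \<xi> = (\<lambda>(a, b). u a * \<xi> b)"

definition partial_op ::
  "(('a \<times> 'b \<Rightarrow> complex) \<Rightarrow> ('a \<times> 'b \<Rightarrow> complex)) \<Rightarrow> ('a \<Rightarrow> complex) \<Rightarrow> ('a \<Rightarrow> complex)
     \<Rightarrow> (('b \<Rightarrow> complex) \<Rightarrow> ('b \<Rightarrow> complex))" where
  "partial_op A u v = (SOME B. bdd_op B \<and>
      (\<forall>\<xi>1\<in>l2. \<forall>\<xi>2\<in>l2. l2_inner \<xi>1 (B \<xi>2) = l2_inner (tensor u \<xi>1) (A (tensor v \<xi>2))))"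

type_synonym ('a, 'b) evol = "real \<Rightarrow> real \<Rightarrow> ('a \<times> 'b \<Rightarrow> complex) \<Rightarrow> ('a \<times> 'b \<Rightarrow> complex)"

text \<open>U^(e)_{s,t}: e = False is U_{s,t}, e = True is its adjoint (Z_2 = bool).\<close>
definition Ueps :: "('a, 'b) evol \<Rightarrow> bool \<Rightarrow> real \<Rightarrow> real \<Rightarrow> ('a \<times> 'b \<Rightarrow> complex) \<Rightarrow> ('a \<times> 'b \<Rightarrow> complex)" where
  "Ueps U e s t = (if e then adjoint_op (U s t) else U s t)"

definition fact_op :: "('a, 'b) evol \<Rightarrow> bool \<Rightarrow> real \<Rightarrow> real \<Rightarrow> ('a \<Rightarrow> complex) \<Rightarrow> ('a \<Rightarrow> complex)
     \<Rightarrow> ('b \<Rightarrow> complex) \<Rightarrow> ('b \<Rightarrow> complex)" where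
  "fact_op U e s t u v = partial_op (Ueps U e s t) u v"

definition fact_m1 :: "('a, 'b) evol \<Rightarrow> bool \<Rightarrow> real \<Rightarrow> real \<Rightarrow> ('a \<Rightarrow> complex) \<Rightarrow> ('a \<Rightarrow> complex)
     \<Rightarrow> ('b \<Rightarrow> complex) \<Rightarrow> ('b \<Rightarrow> complex)" where
  "fact_m1 U e s t u v = partial_op (\<lambda>f. (\<lambda>x. Ueps U e s t f x - f x)) u v"

text \<open>U^(eps)_{s,t}(u,v) for product vectors u = \<otimes> u_k, v = \<otimes> v_k in h^{\<otimes> n}:
  the ordered product of U^(eps_k)_{s_k,t_k}(u_k,v_k); a list entry is (eps_k, s_k, t_k, u_k, v_k).\<close>
definition prod_op :: "('a, 'b) evol \<Rightarrow> (bool \<times> real \<times> real \<times> ('a \<Rightarrow> complex) \<times> ('a \<Rightarrow> complex)) list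
     \<Rightarrow> ('b \<Rightarrow> complex) \<Rightarrow> ('b \<Rightarrow> complex)" where
  "prod_op U xs = foldr (\<lambda>(e, a, b, u, v) X. fact_op U e a b u v \<circ> X) xs id"

text \<open>(U^(eps)_{s,t} - 1)(p,w) for product vectors p,w in h^{\<otimes> n}, entries (eps_k, p_k, w_k);
  uses 1(p,w) = <p,w> 1 with <p,w> = prod_k <p_k,w_k>.\<close>
definition prod_m1 :: "('a, 'b) evol \<Rightarrow> real \<Rightarrow> real \<Rightarrow> (bool \<times> ('a \<Rightarrow> complex) \<times> ('a \<Rightarrow> complex)) list
     \<Rightarrow> ('b \<Rightarrow> complex) \<Rightarrow> ('b \<Rightarrow> complex)" where
  "prod_m1 U s t ys = (\<lambda>\<xi> j. prod_op U (map (\<lambda>(e, p, w). (e, s, t, p, w)) ys) \<xi> j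
        - (\<Prod>(e, p, w)\<leftarrow>ys. l2_inner p w) * \<xi> j)"

definition expect :: "('b \<Rightarrow> complex) \<Rightarrow> (('b \<Rightarrow> complex) \<Rightarrow> ('b \<Rightarrow> complex)) \<Rightarrow> complex" where
  "expect \<Omega> X = l2_inner \<Omega> (X \<Omega>)"

definition times_in :: "real \<Rightarrow> real \<Rightarrow> (bool \<times> real \<times> real \<times> 'x \<times> 'y) list \<Rightarrow> bool" where
  "times_in s t xs \<longleftrightarrow> sorted (s # concat (map (\<lambda>(e, a, b, u, v). [a, b]) xs) @ [t])"

definition vecs_ok :: "(bool \<times> real \<times> real \<times> ('a \<Rightarrow> complex) \<times> ('a \<Rightarrow> complex)) list \<Rightarrow> bool" where
  "vecs_ok xs \<longleftrightarrow> (\<forall>(e, a, b, u, v)\<in>set xs. u \<in> l2 \<and> v \<in> l2)"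

definition vecs_ok' :: "(bool \<times> ('a \<Rightarrow> complex) \<times> ('a \<Rightarrow> complex)) list \<Rightarrow> bool" where
  "vecs_ok' xs \<longleftrightarrow> (\<forall>(e, u, v)\<in>set xs. u \<in> l2 \<and> v \<in> l2)"

definition unitary_family :: "('a, 'b) evol \<Rightarrow> bool" where
  "unitary_family U \<longleftrightarrow> (\<forall>s t. 0 \<le> s \<longrightarrow> s \<le> t \<longrightarrow> unitary_op (U s t))"

definition A1 :: "('a, 'b) evol \<Rightarrow> bool" where
  "A1 U \<longleftrightarrow> (\<forall>r s t. 0 \<le> r \<longrightarrow> r \<le> s \<longrightarrow> s \<le> t \<longrightarrow> (\<forall>f\<in>l2. U r s (U s t f) = U r t f))"

definition A2i :: "('a, 'b) evol \<Rightarrow> bool" where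
  "A2i U \<longleftrightarrow> (\<forall>s1 t1 s2 t2 u1 v1 u2 v2.
      0 \<le> s1 \<longrightarrow> s1 \<le> t1 \<longrightarrow> 0 \<le> s2 \<longrightarrow> s2 \<le> t2 \<longrightarrow> {s1..<t1} \<inter> {s2..<t2} = {} \<longrightarrow>
      u1 \<in> l2 \<longrightarrow> v1 \<in> l2 \<longrightarrow> u2 \<in> l2 \<longrightarrow> v2 \<in> l2 \<longrightarrow>
      (\<forall>\<xi>\<in>l2. fact_op U False s1 t1 u1 v1 (fact_op U False s2 t2 u2 v2 \<xi>)
               = fact_op U False s2 t2 u2 v2 (fact_op U False s1 t1 u1 v1 \<xi>)) \<and>
      (\<forall>\<xi>\<in>l2. fact_op U False s1 t1 u1 v1 (adjoint_op (fact_op U False s2 t2 u2 v2) \<xi>)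
               = adjoint_op (fact_op U False s2 t2 u2 v2) (fact_op U False s1 t1 u1 v1 \<xi>)))"

definition A2ii :: "('a, 'b) evol \<Rightarrow> ('b \<Rightarrow> complex) \<Rightarrow> bool" where
  "A2ii U \<Omega> \<longleftrightarrow> (\<forall>s1 t1 s2 t2 xs ys.
      0 \<le> s1 \<longrightarrow> s1 \<le> t1 \<longrightarrow> 0 \<le> s2 \<longrightarrow> s2 \<le> t2 \<longrightarrow> {s1..<t1} \<inter> {s2..<t2} = {} \<longrightarrow>
      xs \<noteq> [] \<longrightarrow> ys \<noteq> [] \<longrightarrow> times_in s1 t1 xs \<longrightarrow> times_in s2 t2 ys \<longrightarrow>
      vecs_ok xs \<longrightarrow> vecs_ok ys \<longrightarrow>
      expect \<Omega> (prod_op U xs \<circ> prod_op U ys) = expect \<Omega> (prod_op U xs) * expect \<Omega> (prod_op U ys))"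

definition A3 :: "('a, 'b) evol \<Rightarrow> ('b \<Rightarrow> complex) \<Rightarrow> bool" where
  "A3 U \<Omega> \<longleftrightarrow> (\<forall>s t xs. 0 \<le> s \<longrightarrow> s \<le> t \<longrightarrow> xs \<noteq> [] \<longrightarrow> vecs_ok' xs \<longrightarrow>
      expect \<Omega> (prod_op U (map (\<lambda>(e, u, v). (e, s, t, u, v)) xs))
      = expect \<Omega> (prod_op U (map (\<lambda>(e, u, v). (e, 0, t - s, u, v)) xs)))"

definition B' :: "('a, 'b) evol \<Rightarrow> ('b \<Rightarrow> complex) \<Rightarrow> bool" where
  "B' U \<Omega> \<longleftrightarrow> (\<forall>u\<in>l2. \<forall>v\<in>l2. ((\<lambda>t. expect \<Omega> (fact_m1 U False 0 t u v)) \<longlongrightarrow> 0) (at_right 0))"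

definition C :: "('a, 'b) evol \<Rightarrow> ('b \<Rightarrow> complex) \<Rightarrow> bool" where
  "C U \<Omega> \<longleftrightarrow> (\<forall>e1 e2 e3 u1 v1 u2 v2 u3 v3.
      u1 \<in> l2 \<longrightarrow> v1 \<in> l2 \<longrightarrow> u2 \<in> l2 \<longrightarrow> v2 \<in> l2 \<longrightarrow> u3 \<in> l2 \<longrightarrow> v3 \<in> l2 \<longrightarrow>
      ((\<lambda>t. expect \<Omega> (fact_m1 U e1 0 t u1 v1 \<circ> fact_m1 U e2 0 t u2 v2 \<circ> fact_m1 U e3 0 t u3 v3)
            / complex_of_real t) \<longlongrightarrow> 0) (at_right 0))"

text \<open>T_t on h: <u, T_t v> = <Omega, U_t(u,v) Omega>; D(G) is the domain of its generator.\<close>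
definition Tsg :: "('a, 'b) evol \<Rightarrow> ('b \<Rightarrow> complex) \<Rightarrow> real \<Rightarrow> ('a \<Rightarrow> complex) \<Rightarrow> ('a \<Rightarrow> complex)" where
  "Tsg U \<Omega> t = (SOME B. bdd_op B \<and>
      (\<forall>u\<in>l2. \<forall>v\<in>l2. l2_inner u (B v) = expect \<Omega> (fact_op U False 0 t u v)))"

definition domG :: "('a, 'b) evol \<Rightarrow> ('b \<Rightarrow> complex) \<Rightarrow> ('a \<Rightarrow> complex) set" where
  "domG U \<Omega> = {v \<in> l2. \<exists>g\<in>l2.
      ((\<lambda>t. l2_norm (\<lambda>i. (Tsg U \<Omega> t v i - v i) / complex_of_real t - g i)) \<longlongrightarrow> 0) (at_right 0)}"

end

theory Submission
  imports Defs
begin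


lemma l2_iff: "f \<in> l2 \<longleftrightarrow> (\<lambda>i. (cmod (f i))\<^sup>2) summable_on UNIV"
  by (simp add: l2_def)

lemma summable_half:
  fixes h :: "'i \<Rightarrow> real"
  assumes "h summable_on UNIV"
  shows "(\<lambda>i. h i / 2) summable_on UNIV"
  using summable_on_cmult_left[OF assms, of "1/2"] by simp

lemma l2_prod_abs:
  assumes "f \<in> l2" "g \<in> l2"
  shows "(\<lambda>i. norm (cnj (f i) * g i)) summable_on UNIV"
proof -
  have s0: "(\<lambda>i. (cmod (f i))\<^sup>2 + (cmod (g i))\<^sup>2) summable_on UNIV"
    using assms unfolding l2_iff by (rule summable_on_add)
  have s: "(\<lambda>i. ((cmod (f i))\<^sup>2 + (cmod (g i))\<^sup>2) / 2) summable_on UNIV"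
    by (rule summable_half[OF s0])
  show ?thesis
  proof (rule Infinite_Sum.abs_summable_on_comparison_test'[OF s])
    fix i
    have "cmod (f i) * cmod (g i) \<le> ((cmod (f i))\<^sup>2 + (cmod (g i))\<^sup>2) / 2"
      using sum_squares_bound[of "cmod (f i)" "cmod (g i)"] by (simp add: power2_eq_square)
    then show "norm (cnj (f i) * g i) \<le> ((cmod (f i))\<^sup>2 + (cmod (g i))\<^sup>2) / 2"
      by (simp add: norm_mult)
  qed
qed

lemma l2_prod_summable:
  assumes "f \<in> l2" "g \<in> l2"
  shows "(\<lambda>i. cnj (f i) * g i) summable_on UNIV"
  using abs_summable_summable[OF l2_prod_abs[OF assms]] .

lemma l2_add: assumes "f \<in> l2" "g \<in> l2" shows "(\<lambda>i. f i + g i) \<in> l2"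
proof -
  have s0: "(\<lambda>i. 2 * (cmod (f i))\<^sup>2 + 2 * (cmod (g i))\<^sup>2) summable_on UNIV"
    using assms unfolding l2_iff by (intro summable_on_add summable_on_cmult_right)
  show ?thesis unfolding l2_iff
  proof (rule summable_on_comparison_test[OF s0])
    fix i
    have "cmod (f i + g i) \<le> cmod (f i) + cmod (g i)" by (rule norm_triangle_ineq)
    then have "(cmod (f i + g i))\<^sup>2 \<le> (cmod (f i) + cmod (g i))\<^sup>2"
      by (simp add: power_mono)
    also have "\<dots> \<le> 2 * (cmod (f i))\<^sup>2 + 2 * (cmod (g i))\<^sup>2"
      using sum_squares_bound[of "cmod (f i)" "cmod (g i)"] by (simp add: power2_eq_square algebra_simps)
    finally show "(cmod (f i + g i))\<^sup>2 \<le> 2 * (cmod (f i))\<^sup>2 + 2 * (cmod (g i))\<^sup>2" .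
  qed simp
qed

lemma l2_scale: assumes "f \<in> l2" shows "(\<lambda>i. c * f i) \<in> l2"
  using summable_on_cmult_right[OF assms[unfolded l2_iff], of "(cmod c)\<^sup>2"]
  unfolding l2_iff by (simp add: norm_mult power_mult_distrib)

lemma l2_zero: "(\<lambda>i. 0) \<in> l2"
  unfolding l2_iff by simp

lemma l2_uminus: assumes "f \<in> l2" shows "(\<lambda>i. - f i) \<in> l2"
  using l2_scale[OF assms, of "-1"] by simp

lemma l2_diff: assumes "f \<in> l2" "g \<in> l2" shows "(\<lambda>i. f i - g i) \<in> l2"
  using l2_add[OF assms(1) l2_uminus[OF assms(2)]] by simp

lemma l2_delta: "(\<lambda>i. if i = j then 1 else 0) \<in> l2"
proof -
  have "(\<lambda>i. (cmod (if i = j then 1 else 0::complex))\<^sup>2) summable_on {j}" by simp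
  then show ?thesis unfolding l2_iff
    by (rule summable_on_cong_neutral[THEN iffD1, rotated -1]) auto
qed

lemma inner_delta: "l2_inner (\<lambda>i. if i = j then 1 else 0) f = f j"
proof -
  have "l2_inner (\<lambda>i. if i = j then 1 else 0) f = infsum (\<lambda>i. cnj (if i = j then 1 else 0) * f i) {j}"
    unfolding l2_inner_def by (rule infsum_cong_neutral) auto
  then show ?thesis by simp
qed

lemma inner_add_right: assumes "f \<in> l2" "g \<in> l2" "h \<in> l2"
  shows "l2_inner f (\<lambda>i. g i + h i) = l2_inner f g + l2_inner f h"
  unfolding l2_inner_def using l2_prod_summable[OF assms(1,2)] l2_prod_summable[OF assms(1,3)]
  by (simp add: distrib_left infsum_add)

lemma inner_add_left: assumes "f \<in> l2" "g \<in> l2" "h \<in> l2"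
  shows "l2_inner (\<lambda>i. f i + g i) h = l2_inner f h + l2_inner g h"
  unfolding l2_inner_def using l2_prod_summable[OF assms(1,3)] l2_prod_summable[OF assms(2,3)]
  by (simp add: distrib_right infsum_add)

lemma inner_scale_right: "l2_inner f (\<lambda>i. c * g i) = c * l2_inner f g"
  unfolding l2_inner_def
  by (simp add: mult.left_commute infsum_cmult_right')

lemma inner_scale_left: "l2_inner (\<lambda>i. c * f i) g = cnj c * l2_inner f g"
  unfolding l2_inner_def
  by (simp add: mult.assoc infsum_cmult_right')

lemma inner_cnj: "l2_inner g f = cnj (l2_inner f g)"
  unfolding l2_inner_def by (simp flip: infsum_cnj add: mult.commute)

lemma inner_diff_right: assumes "f \<in> l2" "g \<in> l2" "h \<in> l2"
  shows "l2_inner f (\<lambda>i. g i - h i) = l2_inner f g - l2_inner f h"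
  using inner_add_right[OF assms(1,2) l2_uminus[OF assms(3)]] inner_scale_right[of f "-1" h]
  by simp

lemma inner_diff_left: assumes "f \<in> l2" "g \<in> l2" "h \<in> l2"
  shows "l2_inner (\<lambda>i. f i - g i) h = l2_inner f h - l2_inner g h"
  using inner_add_left[OF assms(1) l2_uminus[OF assms(2)] assms(3)] inner_scale_left[of "-1" g h]
  by simp

lemma inner_zero_right: "l2_inner f (\<lambda>i. 0) = 0"
  unfolding l2_inner_def by simp

lemma inner_zero_left: "l2_inner (\<lambda>i. 0) f = 0"
  unfolding l2_inner_def by simp

lemma l2_norm_sq: "(l2_norm f)\<^sup>2 = (\<Sum>\<^sub>\<infinity>i. (cmod (f i))\<^sup>2)"
  unfolding l2_norm_def using infsum_nonneg[where M=UNIV and f="\<lambda>i. (cmod (f i))\<^sup>2"] by simp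

lemma l2_norm_nonneg: "0 \<le> l2_norm f"
  unfolding l2_norm_def using infsum_nonneg[where M=UNIV and f="\<lambda>i. (cmod (f i))\<^sup>2"] by simp

lemma inner_self: assumes "f \<in> l2"
  shows "l2_inner f f = complex_of_real ((l2_norm f)\<^sup>2)"
proof -
  have "((\<lambda>i. complex_of_real ((cmod (f i))\<^sup>2)) has_sum complex_of_real (\<Sum>\<^sub>\<infinity>i. (cmod (f i))\<^sup>2)) UNIV"
    using assms unfolding l2_iff by (intro has_sum_of_real) simp
  moreover have "\<And>i. cnj (f i) * f i = complex_of_real ((cmod (f i))\<^sup>2)"
    by (metis complex_norm_square mult.commute of_real_power)
  ultimately show ?thesis unfolding l2_inner_def l2_norm_sq
    by (simp add: infsumI)
qed

lemma inner_self_Re: assumes "f \<in> l2" shows "Re (l2_inner f f) = (l2_norm f)\<^sup>2"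
  using inner_self[OF assms] by simp

lemma l2_norm_zero: assumes "f \<in> l2" "l2_norm f = 0" shows "f i = 0"
proof -
  have "(\<Sum>\<^sub>\<infinity>i. (cmod (f i))\<^sup>2) = 0" using assms(2) l2_norm_sq[of f] by simp
  then have "(cmod (f i))\<^sup>2 = 0"
    using nonneg_infsum_le_0D[of "\<lambda>i. (cmod (f i))\<^sup>2" UNIV i] assms(1) unfolding l2_iff by simp
  then show ?thesis by simp
qed

lemma cs_aux: fixes x y s :: real assumes "s > 0"
  shows "x * y \<le> (s * x\<^sup>2 + y\<^sup>2 / s) / 2"
proof -
  have "0 \<le> (s * x - y)\<^sup>2" by simp
  then have "2 * s * (x * y) \<le> s * (s * x\<^sup>2) + y\<^sup>2" by (simp add: power2_eq_square algebra_simps)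
  then show ?thesis using assms by (simp add: field_simps power2_eq_square)
qed

lemma cauchy_schwarz: assumes "f \<in> l2" "g \<in> l2"
  shows "cmod (l2_inner f g) \<le> l2_norm f * l2_norm g"
proof (cases "l2_norm f = 0 \<or> l2_norm g = 0")
  case True
  then show ?thesis
  proof
    assume "l2_norm f = 0" 
    then have "f = (\<lambda>i. 0)" using l2_norm_zero[OF assms(1)] by auto
    then show ?thesis by (simp add: inner_zero_left l2_norm_nonneg)
  next
    assume "l2_norm g = 0" 
    then have "g = (\<lambda>i. 0)" using l2_norm_zero[OF assms(2)] by auto
    then show ?thesis by (simp add: inner_zero_right l2_norm_nonneg)
  qed
next
  case False
  define A where "A = l2_norm f" define B where "B = l2_norm g"
  have A: "A > 0" and B: "B > 0" using False l2_norm_nonneg[of f] l2_norm_nonneg[of g]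
    by (auto simp: A_def B_def)
  define s where "s = B / A"
  have s: "s > 0" using A B by (simp add: s_def)
  have sf: "(\<lambda>i. (cmod (f i))\<^sup>2) summable_on UNIV" and sg: "(\<lambda>i. (cmod (g i))\<^sup>2) summable_on UNIV"
    using assms by (simp_all add: l2_iff)
  have sfg: "(\<lambda>i. (s * (cmod (f i))\<^sup>2 + (cmod (g i))\<^sup>2 / s) / 2) summable_on UNIV"
    by (intro summable_half summable_on_add summable_on_cmult_right sf)
       (use summable_on_cmult_left[OF sg, of "1/s"] in simp)
  have "cmod (l2_inner f g) \<le> (\<Sum>\<^sub>\<infinity>i. norm (cnj (f i) * g i))"
    unfolding l2_inner_def by (rule norm_infsum_bound) (rule l2_prod_abs[OF assms])
  also have "\<dots> \<le> (\<Sum>\<^sub>\<infinity>i. (s * (cmod (f i))\<^sup>2 + (cmod (g i))\<^sup>2 / s) / 2)"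
    proof (rule infsum_mono[OF l2_prod_abs[OF assms] sfg])
    fix i show "norm (cnj (f i) * g i) \<le> (s * (cmod (f i))\<^sup>2 + (cmod (g i))\<^sup>2 / s) / 2"
      using cs_aux[OF s, of "cmod (f i)" "cmod (g i)"] by (simp add: norm_mult)
  qed
  also have "\<dots> = (s * (\<Sum>\<^sub>\<infinity>i. (cmod (f i))\<^sup>2) + (\<Sum>\<^sub>\<infinity>i. (cmod (g i))\<^sup>2) / s) / 2"
  proof -
    have "(\<Sum>\<^sub>\<infinity>i. (s * (cmod (f i))\<^sup>2 + (cmod (g i))\<^sup>2 / s) / 2)
        = (\<Sum>\<^sub>\<infinity>i. (s * (cmod (f i))\<^sup>2 + (cmod (g i))\<^sup>2 / s)) / 2"
      by (simp add: infsum_cmult_left'[where c="1/2", simplified])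
    also have "(\<Sum>\<^sub>\<infinity>i. (s * (cmod (f i))\<^sup>2 + (cmod (g i))\<^sup>2 / s))
        = (\<Sum>\<^sub>\<infinity>i. s * (cmod (f i))\<^sup>2) + (\<Sum>\<^sub>\<infinity>i. (cmod (g i))\<^sup>2 / s)"
      by (rule infsum_add) (use summable_on_cmult_right[OF sf] summable_on_cmult_left[OF sg, of "1/s"] in auto)
    also have "\<dots> = s * (\<Sum>\<^sub>\<infinity>i. (cmod (f i))\<^sup>2) + (\<Sum>\<^sub>\<infinity>i. (cmod (g i))\<^sup>2) / s"
      by (simp add: infsum_cmult_right' infsum_cmult_left'[where c="1/s", simplified])
    finally show ?thesis .
  qed
  also have "\<dots> = (s * A\<^sup>2 + B\<^sup>2 / s) / 2"
    by (simp add: A_def B_def l2_norm_sq)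
  also have "\<dots> = A * B" using A B by (simp add: s_def field_simps power2_eq_square)
  finally show ?thesis by (simp add: A_def B_def)
qed



lemma l2_norm_sq_inner: assumes "f \<in> l2" shows "(l2_norm f)\<^sup>2 = Re (l2_inner f f)"
  using inner_self_Re[OF assms] by simp

lemma l2_norm_scale: assumes "f \<in> l2" shows "l2_norm (\<lambda>i. c * f i) = cmod c * l2_norm f"
proof -
  have "l2_inner (\<lambda>i. c * f i) (\<lambda>i. c * f i) = (cnj c * c) * l2_inner f f"
    by (simp add: inner_scale_left inner_scale_right)
  also have "\<dots> = complex_of_real ((cmod c * l2_norm f)\<^sup>2)"
    unfolding inner_self[OF assms] by (simp add: power_mult_distrib mult.commute flip: of_real_power complex_norm_square)
  finally have "(l2_norm (\<lambda>i. c * f i))\<^sup>2 = (cmod c * l2_norm f)\<^sup>2"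
    using inner_self[OF l2_scale[OF assms, of c]] of_real_eq_iff by metis
  then show ?thesis
    by (meson l2_norm_nonneg mult_nonneg_nonneg norm_ge_zero power2_eq_iff_nonneg)
qed

lemma l2_norm_add_sq: assumes "f \<in> l2" "g \<in> l2"
  shows "(l2_norm (\<lambda>i. f i + g i))\<^sup>2 = (l2_norm f)\<^sup>2 + 2 * Re (l2_inner f g) + (l2_norm g)\<^sup>2"
proof -
  have "(l2_norm (\<lambda>i. f i + g i))\<^sup>2 = Re (l2_inner (\<lambda>i. f i + g i) (\<lambda>i. f i + g i))"
    by (rule l2_norm_sq_inner[OF l2_add[OF assms]])
  also have "\<dots> = Re (l2_inner f f + l2_inner f g + (l2_inner g f + l2_inner g g))"
    by (simp add: inner_add_left inner_add_right assms l2_add)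
  also have "\<dots> = (l2_norm f)\<^sup>2 + 2 * Re (l2_inner f g) + (l2_norm g)\<^sup>2"
    using inner_cnj[of g f] l2_norm_sq_inner[OF assms(1)] l2_norm_sq_inner[OF assms(2)] by simp
  finally show ?thesis .
qed

lemma l2_norm_triangle: assumes "f \<in> l2" "g \<in> l2"
  shows "l2_norm (\<lambda>i. f i + g i) \<le> l2_norm f + l2_norm g"
proof -
  have "Re (l2_inner f g) \<le> l2_norm f * l2_norm g"
    using cauchy_schwarz[OF assms] complex_Re_le_cmod order_trans by blast
  then have "(l2_norm (\<lambda>i. f i + g i))\<^sup>2 \<le> (l2_norm f + l2_norm g)\<^sup>2"
    unfolding l2_norm_add_sq[OF assms] by (simp add: power2_sum)
  then show ?thesis using l2_norm_nonneg power2_le_imp_le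
    by (metis add_nonneg_nonneg)
qed

lemma l2_norm_diff_triangle: assumes "f \<in> l2" "g \<in> l2"
  shows "l2_norm (\<lambda>i. f i - g i) \<le> l2_norm f + l2_norm g"
  using l2_norm_triangle[OF assms(1) l2_uminus[OF assms(2)]] l2_norm_scale[OF assms(2), of "-1"] by simp

lemma l2_norm_diff_sq: assumes "f \<in> l2" "g \<in> l2"
  shows "(l2_norm (\<lambda>i. f i - g i))\<^sup>2 = (l2_norm f)\<^sup>2 - 2 * Re (l2_inner f g) + (l2_norm g)\<^sup>2"
  using l2_norm_add_sq[OF assms(1) l2_uminus[OF assms(2)]] l2_norm_scale[OF assms(2), of "-1"]
    inner_scale_right[of f "-1" g] by simp

section \<open>Products of summable families\<close>

lemma prod_family:
  fixes x :: "'a \<Rightarrow> 'c::{real_normed_field, banach}" and y :: "'b \<Rightarrow> 'c"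
  assumes x: "(\<lambda>a. norm (x a)) summable_on UNIV" and y: "(\<lambda>b. norm (y b)) summable_on UNIV"
  shows "(\<lambda>p. norm (x (fst p) * y (snd p))) summable_on UNIV"
    and "(\<lambda>p. x (fst p) * y (snd p)) summable_on UNIV"
    and "infsum (\<lambda>p. x (fst p) * y (snd p)) UNIV = infsum x UNIV * infsum y UNIV"
proof -
  have S: "(UNIV :: ('a \<times> 'b) set) = Sigma UNIV (\<lambda>_. UNIV)" by simp
  have "(\<lambda>p. norm (x (fst p) * y (snd p))) summable_on Sigma UNIV (\<lambda>_. UNIV)"
  proof (rule Infinite_Sum.abs_summable_on_Sigma_iff[THEN iffD2], intro conjI ballI)
    fix a :: 'a
    show "(\<lambda>b. norm (x (fst (a, b)) * y (snd (a, b)))) summable_on UNIV"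
      using summable_on_cmult_right[OF y, of "norm (x a)"] by (simp add: norm_mult)
  next
    have "\<And>a. infsum (\<lambda>b. norm (x (fst (a, b)) * y (snd (a, b)))) UNIV = norm (x a) * infsum (\<lambda>b. norm (y b)) UNIV"
      by (simp add: norm_mult infsum_cmult_right')
    then show "(\<lambda>a. norm (infsum (\<lambda>b. norm (x (fst (a, b)) * y (snd (a, b)))) UNIV)) summable_on UNIV"
      using summable_on_cmult_left[OF x, of "norm (infsum (\<lambda>b. norm (y b)) UNIV)"]
      by (simp add: norm_mult abs_mult)
  qed
  then show 1: "(\<lambda>p. norm (x (fst p) * y (snd p))) summable_on UNIV" by simp
  then show 2: "(\<lambda>p. x (fst p) * y (snd p)) summable_on UNIV" by (rule abs_summable_summable)
  have "infsum (\<lambda>a. infsum (\<lambda>b. x (fst (a,b)) * y (snd (a,b))) UNIV) UNIV = infsum (\<lambda>p. x (fst p) * y (snd p)) (Sigma UNIV (\<lambda>_. UNIV))"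
    by (rule infsum_Sigma_banach) (use 2 in simp)
  then show "infsum (\<lambda>p. x (fst p) * y (snd p)) UNIV = infsum x UNIV * infsum y UNIV"
    by (simp add: infsum_cmult_right' infsum_cmult_left')
qed

section \<open>Tensors\<close>

lemma tensor_app: "tensor u \<xi> (a, b) = u a * \<xi> b"
  by (simp add: tensor_def)

lemma tensor_l2: assumes "u \<in> l2" "\<xi> \<in> l2" shows "tensor u \<xi> \<in> l2"
proof -
  have "(\<lambda>p. (cmod (u (fst p)))\<^sup>2 * (cmod (\<xi> (snd p)))\<^sup>2) summable_on UNIV"
    using prod_family(2)[of "\<lambda>a. (cmod (u a))\<^sup>2" "\<lambda>b. (cmod (\<xi> b))\<^sup>2"] assms
    by (simp add: l2_iff)
  moreover have "\<And>p. (cmod (tensor u \<xi> p))\<^sup>2 = (cmod (u (fst p)))\<^sup>2 * (cmod (\<xi> (snd p)))\<^sup>2"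
    by (auto simp: tensor_def norm_mult power_mult_distrib split: prod.split)
  ultimately show ?thesis by (simp add: l2_iff)
qed

lemma tensor_inner: assumes "u \<in> l2" "\<xi> \<in> l2" "v \<in> l2" "\<eta> \<in> l2"
  shows "l2_inner (tensor u \<xi>) (tensor v \<eta>) = l2_inner u v * l2_inner \<xi> \<eta>"
proof -
  have e: "\<And>p. cnj (tensor u \<xi> p) * tensor v \<eta> p = (cnj (u (fst p)) * v (fst p)) * (cnj (\<xi> (snd p)) * \<eta> (snd p))"
    by (auto simp: tensor_def split: prod.split)
  show ?thesis unfolding l2_inner_def e
    by (rule prod_family(3)) (use l2_prod_abs assms in auto)
qed

lemma tensor_norm: assumes "u \<in> l2" "\<xi> \<in> l2"
  shows "l2_norm (tensor u \<xi>) = l2_norm u * l2_norm \<xi>"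
proof -
  have "(l2_norm (tensor u \<xi>))\<^sup>2 = (l2_norm u * l2_norm \<xi>)\<^sup>2"
  proof -
    have "complex_of_real ((l2_norm (tensor u \<xi>))\<^sup>2) = complex_of_real ((l2_norm u * l2_norm \<xi>)\<^sup>2)"
      using inner_self[OF tensor_l2[OF assms]] tensor_inner[OF assms assms] inner_self[OF assms(1)] inner_self[OF assms(2)]
      by (simp add: power_mult_distrib)
    then show ?thesis using of_real_eq_iff by blast
  qed
  then show ?thesis
    by (meson l2_norm_nonneg mult_nonneg_nonneg power2_eq_iff_nonneg)
qed

lemma tensor_add: "tensor v (\<lambda>i. f i + g i) = (\<lambda>p. tensor v f p + tensor v g p)"
  by (auto simp: tensor_def distrib_left)

lemma tensor_scale: "tensor v (\<lambda>i. c * f i) = (\<lambda>p. c * tensor v f p)"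
  by (auto simp: tensor_def)



section \<open>Contractions\<close>

lemma swap_summable: "(\<lambda>(x,y). h (y,x)) summable_on UNIV \<longleftrightarrow> h summable_on UNIV"
  using summable_on_swap[of h UNIV UNIV] by simp

lemma swap_infsum:
  fixes h :: "'a \<times> 'b \<Rightarrow> 'c::{comm_monoid_add,t2_space}"
  shows "infsum (\<lambda>(x,y). h (y,x)) UNIV = infsum h UNIV"
proof (cases "h summable_on UNIV")
  case True
  then have "(h has_sum infsum h UNIV) (UNIV \<times> UNIV)" by simp
  then have "((\<lambda>(x,y). h (y,x)) has_sum infsum h UNIV) (UNIV \<times> UNIV)" using has_sum_swap by blast
  then show ?thesis by (simp add: infsumI)
next
  case False
  then have "\<not> (\<lambda>(x,y). h (y,x)) summable_on UNIV" using swap_summable by blast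
  with False show ?thesis by (simp add: infsum_not_exists)
qed

lemma swap_l2: assumes "F \<in> l2" shows "(\<lambda>(x,y). F (y,x)) \<in> l2"
proof -
  have "(\<lambda>p. (cmod (F p))\<^sup>2) summable_on UNIV" using assms by (simp add: l2_iff)
  then have "(\<lambda>(x,y). (cmod (F (y,x)))\<^sup>2) summable_on UNIV"
    using swap_summable[of "\<lambda>p. (cmod (F p))\<^sup>2"] by simp
  then show ?thesis unfolding l2_iff by (simp add: case_prod_unfold)
qed

lemma swap_inner: "l2_inner (\<lambda>(x,y). F (y,x)) (\<lambda>(x,y). G (y,x)) = l2_inner F G"
  unfolding l2_inner_def using swap_infsum[of "\<lambda>p. cnj (F p) * G p"]
  by (simp add: case_prod_unfold)

lemma col_sq_summable: assumes "F \<in> l2"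
  shows "(\<lambda>(b,a). (cmod (F (a,b)))\<^sup>2) summable_on UNIV \<times> UNIV"
proof -
  have "(\<lambda>p. (cmod (F p))\<^sup>2) summable_on UNIV" using assms by (simp add: l2_iff)
  then show ?thesis using swap_summable[of "\<lambda>p. (cmod (F p))\<^sup>2"] by simp
qed

lemma col_l2: assumes "F \<in> l2" shows "(\<lambda>a. F (a,b)) \<in> l2"
proof -
  have "(\<lambda>(x,y). (\<lambda>b a. (cmod (F (a,b)))\<^sup>2) x y) summable_on Sigma UNIV (\<lambda>_. UNIV)"
    using col_sq_summable[OF assms] by simp
  from summable_on_SigmaD1[OF this, of b] show ?thesis by (simp add: l2_iff)
qed

lemma colsum: assumes "F \<in> l2"
  shows "(\<lambda>b. \<Sum>\<^sub>\<infinity>a. (cmod (F (a,b)))\<^sup>2) summable_on UNIV"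
    and "(\<Sum>\<^sub>\<infinity>b. \<Sum>\<^sub>\<infinity>a. (cmod (F (a,b)))\<^sup>2) = (l2_norm F)\<^sup>2"
proof -
  have S: "(\<lambda>(x,y). (\<lambda>b a. (cmod (F (a,b)))\<^sup>2) x y) summable_on Sigma UNIV (\<lambda>_. UNIV)"
    using col_sq_summable[OF assms] by simp
  show "(\<lambda>b. \<Sum>\<^sub>\<infinity>a. (cmod (F (a,b)))\<^sup>2) summable_on UNIV"
    using summable_on_Sigma_banach[OF S] by simp
  have "(\<Sum>\<^sub>\<infinity>b. \<Sum>\<^sub>\<infinity>a. (cmod (F (a,b)))\<^sup>2) = infsum (\<lambda>(b,a). (cmod (F (a,b)))\<^sup>2) UNIV"
    using infsum_Sigma'_banach[OF S] by simp
  also have "\<dots> = infsum (\<lambda>p. (cmod (F p))\<^sup>2) UNIV"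
    using swap_infsum[of "\<lambda>p. (cmod (F p))\<^sup>2"] by simp
  finally show "(\<Sum>\<^sub>\<infinity>b. \<Sum>\<^sub>\<infinity>a. (cmod (F (a,b)))\<^sup>2) = (l2_norm F)\<^sup>2"
    by (simp add: l2_norm_sq)
qed

definition contr :: "('a \<Rightarrow> complex) \<Rightarrow> ('a \<times> 'b \<Rightarrow> complex) \<Rightarrow> ('b \<Rightarrow> complex)" where
  "contr \<xi> F = (\<lambda>b. l2_inner \<xi> (\<lambda>a. F (a,b)))"

lemma contr_pt_bound: assumes "\<xi> \<in> l2" "F \<in> l2"
  shows "(cmod (contr \<xi> F b))\<^sup>2 \<le> (l2_norm \<xi>)\<^sup>2 * (\<Sum>\<^sub>\<infinity>a. (cmod (F (a,b)))\<^sup>2)"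
proof -
  have "cmod (contr \<xi> F b) \<le> l2_norm \<xi> * l2_norm (\<lambda>a. F (a,b))"
    unfolding contr_def by (rule cauchy_schwarz[OF assms(1) col_l2[OF assms(2)]])
  then have "(cmod (contr \<xi> F b))\<^sup>2 \<le> (l2_norm \<xi> * l2_norm (\<lambda>a. F (a,b)))\<^sup>2"
    by (simp add: power_mono)
  then show ?thesis by (simp add: power_mult_distrib l2_norm_sq)
qed

lemma contr_l2: assumes "\<xi> \<in> l2" "F \<in> l2" shows "contr \<xi> F \<in> l2"
  unfolding l2_iff
proof (rule summable_on_comparison_test)
  show "(\<lambda>b. (l2_norm \<xi>)\<^sup>2 * (\<Sum>\<^sub>\<infinity>a. (cmod (F (a,b)))\<^sup>2)) summable_on UNIV"
    by (rule summable_on_cmult_right[OF colsum(1)[OF assms(2)]])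
qed (use contr_pt_bound[OF assms] in auto)

lemma contr_norm: assumes "\<xi> \<in> l2" "F \<in> l2" shows "l2_norm (contr \<xi> F) \<le> l2_norm \<xi> * l2_norm F"
proof -
  have "(l2_norm (contr \<xi> F))\<^sup>2 = (\<Sum>\<^sub>\<infinity>b. (cmod (contr \<xi> F b))\<^sup>2)" by (rule l2_norm_sq)
  also have "\<dots> \<le> (\<Sum>\<^sub>\<infinity>b. (l2_norm \<xi>)\<^sup>2 * (\<Sum>\<^sub>\<infinity>a. (cmod (F (a,b)))\<^sup>2))"
    by (rule infsum_mono) (use contr_l2[OF assms] summable_on_cmult_right[OF colsum(1)[OF assms(2)]]
       contr_pt_bound[OF assms] in \<open>auto simp: l2_iff\<close>)
  also have "\<dots> = (l2_norm \<xi> * l2_norm F)\<^sup>2"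
    by (simp add: infsum_cmult_right' colsum(2)[OF assms(2)] power_mult_distrib)
  finally show ?thesis
    by (meson l2_norm_nonneg mult_nonneg_nonneg power2_le_imp_le)
qed

lemma contr_inner: assumes "\<xi> \<in> l2" "\<eta> \<in> l2" "F \<in> l2"
  shows "l2_inner \<eta> (contr \<xi> F) = l2_inner (tensor \<xi> \<eta>) F"
proof -
  define h where "h p = cnj (tensor \<xi> \<eta> p) * F p" for p
  have hs: "h summable_on UNIV" unfolding h_def
    by (rule l2_prod_summable[OF tensor_l2[OF assms(1,2)] assms(3)])
  have S: "(\<lambda>(x,y). (\<lambda>b a. h (a,b)) x y) summable_on Sigma UNIV (\<lambda>_. UNIV)"
    using hs swap_summable[of h] by simp
  have "l2_inner \<eta> (contr \<xi> F) = (\<Sum>\<^sub>\<infinity>b. \<Sum>\<^sub>\<infinity>a. h (a,b))"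
    unfolding l2_inner_def contr_def h_def
    by (simp add: infsum_cmult_right'[symmetric] tensor_app mult.assoc mult.left_commute)
  also have "\<dots> = infsum (\<lambda>(b,a). h (a,b)) UNIV"
    using infsum_Sigma'_banach[OF S] by simp
  also have "\<dots> = infsum h UNIV" by (rule swap_infsum)
  finally show ?thesis unfolding h_def l2_inner_def by simp
qed

lemma contr_add: assumes "\<xi> \<in> l2" "F \<in> l2" "G \<in> l2"
  shows "contr \<xi> (\<lambda>p. F p + G p) = (\<lambda>b. contr \<xi> F b + contr \<xi> G b)"
  unfolding contr_def using inner_add_right[OF assms(1) col_l2[OF assms(2)] col_l2[OF assms(3)]] by simp

lemma contr_diff: assumes "\<xi> \<in> l2" "F \<in> l2" "G \<in> l2"
  shows "contr \<xi> (\<lambda>p. F p - G p) = (\<lambda>b. contr \<xi> F b - contr \<xi> G b)"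
  unfolding contr_def using inner_diff_right[OF assms(1) col_l2[OF assms(2)] col_l2[OF assms(3)]] by simp

lemma contr_scale: "contr \<xi> (\<lambda>p. c * F p) = (\<lambda>b. c * contr \<xi> F b)"
  unfolding contr_def by (rule ext) (rule inner_scale_right)

lemma contr_tensor: "contr \<xi> (tensor w \<eta>) = (\<lambda>b. l2_inner \<xi> w * \<eta> b)"
  unfolding contr_def tensor_app using inner_scale_right[of \<xi> _ w]
  by (simp add: mult.commute)

definition contr2 :: "('b \<Rightarrow> complex) \<Rightarrow> ('a \<times> 'b \<Rightarrow> complex) \<Rightarrow> ('a \<Rightarrow> complex)" where
  "contr2 \<omega> F = contr \<omega> (\<lambda>(x,y). F (y,x))"

lemma contr2_l2: assumes "\<omega> \<in> l2" "F \<in> l2" shows "contr2 \<omega> F \<in> l2"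
  unfolding contr2_def by (rule contr_l2[OF assms(1) swap_l2[OF assms(2)]])

lemma contr2_inner: assumes "\<omega> \<in> l2" "u \<in> l2" "F \<in> l2"
  shows "l2_inner u (contr2 \<omega> F) = l2_inner (tensor u \<omega>) F"
proof -
  have "l2_inner u (contr2 \<omega> F) = l2_inner (tensor \<omega> u) (\<lambda>(x,y). F (y,x))"
    unfolding contr2_def by (rule contr_inner[OF assms(1,2) swap_l2[OF assms(3)]])
  also have "tensor \<omega> u = (\<lambda>(x,y). tensor u \<omega> (y,x))" by (auto simp: tensor_def)
  finally show ?thesis using swap_inner by simp
qed



section \<open>Operators\<close>

lemma ext_by_delta: assumes "\<And>x. x \<in> l2 \<Longrightarrow> l2_inner x f = l2_inner x g" shows "f = g"
proof
  fix j show "f j = g j"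
    using assms[OF l2_delta[of j]] by (simp add: inner_delta)
qed

lemma bdd_l2: "bdd_op A \<Longrightarrow> f \<in> l2 \<Longrightarrow> A f \<in> l2"
  by (simp add: bdd_op_def)

lemma bdd_add: "bdd_op A \<Longrightarrow> f \<in> l2 \<Longrightarrow> g \<in> l2 \<Longrightarrow> A (\<lambda>i. f i + g i) = (\<lambda>j. A f j + A g j)"
  by (simp add: bdd_op_def)

lemma bdd_scale: "bdd_op A \<Longrightarrow> f \<in> l2 \<Longrightarrow> A (\<lambda>i. c * f i) = (\<lambda>j. c * A f j)"
  by (simp add: bdd_op_def)

lemma bdd_bound: "bdd_op A \<Longrightarrow> \<exists>C. \<forall>f\<in>l2. l2_norm (A f) \<le> C * l2_norm f"
  by (simp add: bdd_op_def)

lemma bdd_diff: assumes "bdd_op A" "f \<in> l2" "g \<in> l2" shows "A (\<lambda>i. f i - g i) = (\<lambda>j. A f j - A g j)"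
proof -
  have "A (\<lambda>i. f i - g i) = A (\<lambda>i. f i + (-1) * g i)" by simp
  also have "\<dots> = (\<lambda>j. A f j + A (\<lambda>i. (-1) * g i) j)" by (rule bdd_add[OF assms(1,2) l2_scale[OF assms(3)]])
  also have "\<dots> = (\<lambda>j. A f j - A g j)" using bdd_scale[OF assms(1,3), of "-1"] by simp
  finally show ?thesis .
qed

lemma bdd_zero: assumes "bdd_op A" shows "A (\<lambda>i. 0) = (\<lambda>j. 0)"
  using bdd_scale[OF assms l2_zero, of 0] by simp

lemma partial_op_char:
  fixes A :: "('a \<times> 'b \<Rightarrow> complex) \<Rightarrow> ('a \<times> 'b \<Rightarrow> complex)"
  assumes A: "bdd_op A" and u: "u \<in> l2" and v: "v \<in> l2"
  shows "bdd_op (partial_op A u v)"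
    and "\<And>\<xi>. \<xi> \<in> l2 \<Longrightarrow> partial_op A u v \<xi> = contr u (A (tensor v \<xi>))"
proof -
  define B where "B \<xi> = contr u (A (tensor v \<xi>))" for \<xi>
  have Bl2: "B \<xi> \<in> l2" if "\<xi> \<in> l2" for \<xi>
    unfolding B_def by (rule contr_l2[OF u bdd_l2[OF A tensor_l2[OF v that]]])
  have Bb: "bdd_op B"
    unfolding bdd_op_def
  proof (intro conjI ballI allI)
    fix f g :: "'b \<Rightarrow> complex" assume f: "f \<in> l2" and g: "g \<in> l2"
    show "B (\<lambda>i. f i + g i) = (\<lambda>j. B f j + B g j)"
      unfolding B_def tensor_add
      using bdd_add[OF A tensor_l2[OF v f] tensor_l2[OF v g]]
        contr_add[OF u bdd_l2[OF A tensor_l2[OF v f]] bdd_l2[OF A tensor_l2[OF v g]]] by simp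
  next
    fix f :: "'b \<Rightarrow> complex" and c assume f: "f \<in> l2"
    show "B (\<lambda>i. c * f i) = (\<lambda>j. c * B f j)"
      unfolding B_def tensor_scale using bdd_scale[OF A tensor_l2[OF v f]] contr_scale by simp
  next
    fix f :: "'b \<Rightarrow> complex" assume "f \<in> l2" then show "B f \<in> l2" by (rule Bl2)
  next
    obtain C where C: "\<forall>f\<in>l2. l2_norm (A f) \<le> C * l2_norm f" using bdd_bound[OF A] by blast
    show "\<exists>C. \<forall>f\<in>l2. l2_norm (B f) \<le> C * l2_norm f"
    proof (intro exI ballI)
      fix f :: "'b \<Rightarrow> complex" assume f: "f \<in> l2"
      have "l2_norm (B f) \<le> l2_norm u * l2_norm (A (tensor v f))"
        unfolding B_def by (rule contr_norm[OF u bdd_l2[OF A tensor_l2[OF v f]]])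
      also have "\<dots> \<le> l2_norm u * (C * (l2_norm v * l2_norm f))"
        using C tensor_l2[OF v f] tensor_norm[OF v f] l2_norm_nonneg[of u]
        by (metis mult_left_mono)
      finally show "l2_norm (B f) \<le> (l2_norm u * C * l2_norm v) * l2_norm f" by (simp add: ac_simps)
    qed
  qed
  have Bp: "\<forall>\<xi>1\<in>l2. \<forall>\<xi>2\<in>l2. l2_inner \<xi>1 (B \<xi>2) = l2_inner (tensor u \<xi>1) (A (tensor v \<xi>2))"
    unfolding B_def using contr_inner[OF u _ bdd_l2[OF A tensor_l2[OF v]]] by blast
  have ex: "\<exists>B. bdd_op B \<and> (\<forall>\<xi>1\<in>l2. \<forall>\<xi>2\<in>l2. l2_inner \<xi>1 (B \<xi>2) = l2_inner (tensor u \<xi>1) (A (tensor v \<xi>2)))"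
    using Bb Bp by blast
  have P: "bdd_op (partial_op A u v) \<and> (\<forall>\<xi>1\<in>l2. \<forall>\<xi>2\<in>l2. l2_inner \<xi>1 (partial_op A u v \<xi>2) = l2_inner (tensor u \<xi>1) (A (tensor v \<xi>2)))"
    unfolding partial_op_def by (rule someI_ex[OF ex])
  then show "bdd_op (partial_op A u v)" by blast
  fix \<xi> :: "'b \<Rightarrow> complex" assume \<xi>: "\<xi> \<in> l2"
  show "partial_op A u v \<xi> = contr u (A (tensor v \<xi>))"
    using P Bp \<xi> unfolding B_def[symmetric] by (intro ext_by_delta) auto
qed

lemma partial_op_inner:
  assumes "bdd_op A" "u \<in> l2" "v \<in> l2" "\<xi>1 \<in> l2" "\<xi>2 \<in> l2"
  shows "l2_inner \<xi>1 (partial_op A u v \<xi>2) = l2_inner (tensor u \<xi>1) (A (tensor v \<xi>2))"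
  using partial_op_char(2)[OF assms(1-3) assms(5)] contr_inner[OF assms(2,4) bdd_l2[OF assms(1) tensor_l2[OF assms(3,5)]]]
  by simp

section \<open>Unitaries\<close>

lemma unitary_bdd: "unitary_op V \<Longrightarrow> bdd_op V" by (simp add: unitary_op_def)
lemma unitary_isom: "unitary_op V \<Longrightarrow> f \<in> l2 \<Longrightarrow> g \<in> l2 \<Longrightarrow> l2_inner (V f) (V g) = l2_inner f g"
  by (simp add: unitary_op_def)
lemma unitary_surj: "unitary_op V \<Longrightarrow> g \<in> l2 \<Longrightarrow> \<exists>f\<in>l2. V f = g"
  unfolding unitary_op_def by (metis imageE)

lemma unitary_inj: assumes V: "unitary_op V" and "x \<in> l2" "y \<in> l2" "V x = V y" shows "x = y"
proof -
  have d: "(\<lambda>i. x i - y i) \<in> l2" using assms by (simp add: l2_diff)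
  have "V (\<lambda>i. x i - y i) = (\<lambda>j. 0)" using bdd_diff[OF unitary_bdd[OF V] assms(2,3)] assms(4) by simp
  then have "l2_inner (\<lambda>i. x i - y i) (\<lambda>i. x i - y i) = 0"
    using unitary_isom[OF V d d] by (simp add: inner_zero_left)
  then have "l2_norm (\<lambda>i. x i - y i) = 0" using inner_self[OF d] by simp
  then show ?thesis using l2_norm_zero[OF d] by auto
qed

lemma adjoint_facts:
  fixes V :: "('i \<Rightarrow> complex) \<Rightarrow> ('i \<Rightarrow> complex)"
  assumes V: "unitary_op V"
  shows "bdd_op (adjoint_op V)"
    and "\<And>f g. f \<in> l2 \<Longrightarrow> g \<in> l2 \<Longrightarrow> l2_inner (adjoint_op V f) g = l2_inner f (V g)"
    and "\<And>f. f \<in> l2 \<Longrightarrow> V (adjoint_op V f) = f"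
    and "\<And>f. f \<in> l2 \<Longrightarrow> adjoint_op V (V f) = f"
proof -
  define R where "R f = (SOME g. g \<in> l2 \<and> V g = f)" for f
  have R: "R f \<in> l2 \<and> V (R f) = f" if "f \<in> l2" for f :: "'i \<Rightarrow> complex"
  proof -
    have "\<exists>g. g \<in> l2 \<and> V g = f" using unitary_surj[OF V that] by blast
    then show ?thesis unfolding R_def by (rule someI_ex)
  qed
  have Vl2: "V f \<in> l2" if "f \<in> l2" for f :: "'i \<Rightarrow> complex" using bdd_l2[OF unitary_bdd[OF V] that] .
  have Rb: "bdd_op R"
    unfolding bdd_op_def
  proof (intro conjI ballI allI)
    fix f g :: "'i \<Rightarrow> complex" assume f: "f \<in> l2" and g: "g \<in> l2"
    show "R (\<lambda>i. f i + g i) = (\<lambda>j. R f j + R g j)"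
      apply (rule unitary_inj[OF V])
      using R[OF l2_add[OF f g]] R[OF f] R[OF g] bdd_add[OF unitary_bdd[OF V], of "R f" "R g"]
      by (auto intro: l2_add)
  next
    fix f :: "'i \<Rightarrow> complex" and c assume f: "f \<in> l2"
    show "R (\<lambda>i. c * f i) = (\<lambda>j. c * R f j)"
      apply (rule unitary_inj[OF V])
      using R[OF l2_scale[OF f]] R[OF f] bdd_scale[OF unitary_bdd[OF V], of "R f" c]
      by (auto intro: l2_scale)
  next
    fix f :: "'i \<Rightarrow> complex" assume "f \<in> l2" then show "R f \<in> l2" using R by blast
  next
    show "\<exists>C. \<forall>f\<in>l2. l2_norm (R f) \<le> C * l2_norm f"
    proof (intro exI ballI)
      fix f :: "'i \<Rightarrow> complex" assume f: "f \<in> l2"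
      have "(l2_norm (R f))\<^sup>2 = (l2_norm f)\<^sup>2"
        using l2_norm_sq_inner[OF f] l2_norm_sq_inner[of "R f"] R[OF f] unitary_isom[OF V, of "R f" "R f"] by simp
      then show "l2_norm (R f) \<le> 1 * l2_norm f"
        using l2_norm_nonneg[of "R f"] l2_norm_nonneg[of f] by (simp add: power2_eq_iff_nonneg)
    qed
  qed
  have Rp: "l2_inner (R f) g = l2_inner f (V g)" if "f \<in> l2" "g \<in> l2" for f g :: "'i \<Rightarrow> complex"
    using unitary_isom[OF V, of "R f" g] R[OF that(1)] that by simp
  have ex: "\<exists>B. bdd_op B \<and> (\<forall>f\<in>l2. \<forall>g::'i\<Rightarrow>complex\<in>l2. l2_inner (B f) g = l2_inner f (V g))"
    using Rb Rp by blast
  have P: "bdd_op (adjoint_op V) \<and> (\<forall>f\<in>l2. \<forall>g\<in>l2. l2_inner (adjoint_op V f) g = l2_inner f (V g))"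
    unfolding adjoint_op_def by (rule someI_ex[OF ex])
  then show "bdd_op (adjoint_op V)"
    and AP: "\<And>f g. f \<in> l2 \<Longrightarrow> g \<in> l2 \<Longrightarrow> l2_inner (adjoint_op V f) g = l2_inner f (V g)" by auto
  have AR: "adjoint_op V f = R f" if f: "f \<in> l2" for f :: "'i \<Rightarrow> complex"
  proof (rule ext_by_delta)
    fix x :: "'i \<Rightarrow> complex" assume x: "x \<in> l2"
    have "l2_inner x (adjoint_op V f) = cnj (l2_inner (adjoint_op V f) x)" by (rule inner_cnj)
    also have "\<dots> = cnj (l2_inner (R f) x)" using AP[OF f x] Rp[OF f x] by simp
    also have "\<dots> = l2_inner x (R f)" by (simp add: inner_cnj[of x])
    finally show "l2_inner x (adjoint_op V f) = l2_inner x (R f)" .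
  qed
  show "\<And>f. f \<in> l2 \<Longrightarrow> V (adjoint_op V f) = f" using AR R by simp
  show "\<And>f. f \<in> l2 \<Longrightarrow> adjoint_op V (V f) = f"
  proof -
    fix f :: "'i \<Rightarrow> complex" assume f: "f \<in> l2"
    show "adjoint_op V (V f) = f"
      using AR[OF Vl2[OF f]] R[OF Vl2[OF f]] unitary_inj[OF V _ f] by auto
  qed
qed

lemma adjoint_unitary: fixes V :: "('i \<Rightarrow> complex) \<Rightarrow> ('i \<Rightarrow> complex)" assumes V: "unitary_op V" shows "unitary_op (adjoint_op V)"
  unfolding unitary_op_def
proof (intro conjI ballI)
  show "bdd_op (adjoint_op V)" by (rule adjoint_facts(1)[OF V])
  show "adjoint_op V ` l2 = l2"
  proof
    show "adjoint_op V ` l2 \<subseteq> l2" using bdd_l2[OF adjoint_facts(1)[OF V]] by blast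
    show "l2 \<subseteq> adjoint_op V ` l2"
    proof
      fix g :: "'i \<Rightarrow> complex" assume g: "g \<in> l2"
      then have "g = adjoint_op V (V g)" using adjoint_facts(4)[OF V] by simp
      then show "g \<in> adjoint_op V ` l2" using bdd_l2[OF unitary_bdd[OF V] g] by blast
    qed
  qed
  fix f g :: "'i \<Rightarrow> complex" assume f: "f \<in> l2" and g: "g \<in> l2"
  show "l2_inner (adjoint_op V f) (adjoint_op V g) = l2_inner f g"
    using adjoint_facts(2)[OF V f bdd_l2[OF adjoint_facts(1)[OF V] g]] adjoint_facts(3)[OF V g] by simp
qed



locale evo =
  fixes U :: "('a, 'b) evol" and \<Omega> :: "'b \<Rightarrow> complex"
  assumes unit: "unitary_family U"
    and Om: "\<Omega> \<in> l2" and Om1: "l2_norm \<Omega> = 1"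
begin

definition W :: "bool \<Rightarrow> real \<Rightarrow> ('a \<times> 'b \<Rightarrow> complex) \<Rightarrow> ('a \<times> 'b \<Rightarrow> complex)" where
  "W e t = Ueps U e 0 t"

definition Dm :: "bool \<Rightarrow> real \<Rightarrow> ('a \<times> 'b \<Rightarrow> complex) \<Rightarrow> ('a \<times> 'b \<Rightarrow> complex)" where
  "Dm e t = (\<lambda>f x. W e t f x - f x)"

abbreviation X where "X e t u v \<equiv> fact_m1 U e 0 t u v"

lemma X_def': "X e t u v = partial_op (Dm e t) u v"
  by (simp add: fact_m1_def Dm_def W_def)

lemma U_unitary: "0 \<le> t \<Longrightarrow> unitary_op (U 0 t)"
  using unit by (simp add: unitary_family_def)

lemma W_unitary: "0 \<le> t \<Longrightarrow> unitary_op (W e t)"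
  by (cases e) (auto simp: W_def Ueps_def U_unitary adjoint_unitary)

lemma W_bdd: "0 \<le> t \<Longrightarrow> bdd_op (W e t)"
  using W_unitary unitary_bdd by blast

lemma W_l2: "0 \<le> t \<Longrightarrow> f \<in> l2 \<Longrightarrow> W e t f \<in> l2"
  using W_bdd bdd_l2 by blast

lemma W_isom: "0 \<le> t \<Longrightarrow> f \<in> l2 \<Longrightarrow> g \<in> l2 \<Longrightarrow> l2_inner (W e t f) (W e t g) = l2_inner f g"
  using W_unitary unitary_isom by blast

lemma W_adj: assumes t: "0 \<le> t" and f: "f \<in> l2" and g: "g \<in> l2"
  shows "l2_inner (W e t f) g = l2_inner f (W (\<not> e) t g)"
proof (cases e)
  case True
  then show ?thesis using adjoint_facts(2)[OF U_unitary[OF t] f g] by (simp add: W_def Ueps_def)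
next
  case False
  have a: "adjoint_op (U 0 t) g \<in> l2" using bdd_l2[OF adjoint_facts(1)[OF U_unitary[OF t]] g] .
  have "l2_inner (U 0 t f) g = l2_inner (U 0 t f) (U 0 t (adjoint_op (U 0 t) g))"
    using adjoint_facts(3)[OF U_unitary[OF t] g] by simp
  also have "\<dots> = l2_inner f (adjoint_op (U 0 t) g)" using unitary_isom[OF U_unitary[OF t] f a] .
  finally show ?thesis using False by (simp add: W_def Ueps_def)
qed

lemma W_norm: assumes "0 \<le> t" "f \<in> l2" shows "l2_norm (W e t f) = l2_norm f"
proof -
  have "(l2_norm (W e t f))\<^sup>2 = (l2_norm f)\<^sup>2"
    using W_isom[of t f f e] l2_norm_sq_inner[of f] l2_norm_sq_inner[of "W e t f"] W_l2[of t f e] assms by simp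
  then show ?thesis using l2_norm_nonneg[of f] l2_norm_nonneg[of "W e t f"] by (simp add: power2_eq_iff_nonneg)
qed

lemma Dm_app: "Dm e t f = (\<lambda>x. W e t f x - f x)" by (simp add: Dm_def)

lemma Dm_l2: "0 \<le> t \<Longrightarrow> f \<in> l2 \<Longrightarrow> Dm e t f \<in> l2"
  unfolding Dm_def by (rule l2_diff) (auto intro: W_l2)

lemma Dm_bdd: assumes t: "0 \<le> t" shows "bdd_op (Dm e t)"
  unfolding bdd_op_def
proof (intro conjI ballI allI)
  fix f :: "'a \<times> 'b \<Rightarrow> complex" assume "f \<in> l2" then show "Dm e t f \<in> l2" using Dm_l2[OF t] by blast
next
  fix f g :: "'a \<times> 'b \<Rightarrow> complex" assume f: "f \<in> l2" and g: "g \<in> l2"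
  show "Dm e t (\<lambda>i. f i + g i) = (\<lambda>j. Dm e t f j + Dm e t g j)"
    unfolding Dm_def using bdd_add[OF W_bdd[OF t] f g] by (simp add: algebra_simps)
next
  fix f :: "'a \<times> 'b \<Rightarrow> complex" and c assume f: "f \<in> l2"
  show "Dm e t (\<lambda>i. c * f i) = (\<lambda>j. c * Dm e t f j)"
    unfolding Dm_def using bdd_scale[OF W_bdd[OF t] f] by (simp add: algebra_simps)
next
  show "\<exists>C. \<forall>f\<in>l2. l2_norm (Dm e t f) \<le> C * l2_norm f"
  proof (intro exI ballI)
    fix f :: "'a \<times> 'b \<Rightarrow> complex" assume f: "f \<in> l2"
    show "l2_norm (Dm e t f) \<le> 2 * l2_norm f"
      unfolding Dm_def using l2_norm_diff_triangle[OF W_l2[OF t f] f] W_norm[OF t f] by simp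
  qed
qed

lemma Dm_adj: assumes t: "0 \<le> t" and f: "f \<in> l2" and g: "g \<in> l2"
  shows "l2_inner (Dm e t f) g = l2_inner f (Dm (\<not> e) t g)"
  unfolding Dm_def using W_adj[OF t f g] W_l2[OF t] f g
  by (simp add: inner_diff_left inner_diff_right)

lemma Dm_norm_sq: assumes t: "0 \<le> t" and f: "f \<in> l2"
  shows "(l2_norm (Dm e t f))\<^sup>2 = - 2 * Re (l2_inner f (Dm e t f))"
proof -
  have "(l2_norm (Dm e t f))\<^sup>2 = (l2_norm (W e t f))\<^sup>2 - 2 * Re (l2_inner (W e t f) f) + (l2_norm f)\<^sup>2"
    unfolding Dm_def by (rule l2_norm_diff_sq[OF W_l2[OF t f] f])
  moreover have "Re (l2_inner (W e t f) f) = Re (l2_inner f (W e t f))"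
    using inner_cnj[of "W e t f" f] by simp
  moreover have "l2_inner f (Dm e t f) = l2_inner f (W e t f) - l2_inner f f"
    unfolding Dm_def by (rule inner_diff_right[OF f W_l2[OF t f] f])
  ultimately show ?thesis using W_norm[OF t f] inner_self_Re[OF f] by simp
qed

lemma Dm_ident: assumes t: "0 \<le> t" and a: "a \<in> l2" and b: "b \<in> l2"
  shows "l2_inner a (Dm False t b) + l2_inner a (Dm True t b) = - l2_inner (Dm False t a) (Dm False t b)"
proof -
  have "l2_inner (Dm False t a) (Dm False t b) = l2_inner (W False t a) (Dm False t b) - l2_inner a (Dm False t b)"
    unfolding Dm_app[of False t a] by (rule inner_diff_left[OF W_l2[OF t a] a Dm_l2[OF t b]])
  also have "l2_inner (W False t a) (Dm False t b) = l2_inner (W False t a) (W False t b) - l2_inner (W False t a) b"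
    unfolding Dm_def by (rule inner_diff_right[OF W_l2[OF t a] W_l2[OF t b] b])
  also have "l2_inner (W False t a) (W False t b) = l2_inner a b" by (rule W_isom[OF t a b])
  also have "l2_inner (W False t a) b = l2_inner a (W True t b)" using W_adj[OF t a b, of False] by simp
  finally have 1: "l2_inner (Dm False t a) (Dm False t b) = l2_inner a b - l2_inner a (W True t b) - l2_inner a (Dm False t b)" .
  have 2: "l2_inner a (Dm True t b) = l2_inner a (W True t b) - l2_inner a b"
    unfolding Dm_def by (rule inner_diff_right[OF a W_l2[OF t b] b])
  show ?thesis using 1 2 by simp
qed

section \<open>The operators X\<close>

lemma X_bdd: "0 \<le> t \<Longrightarrow> u \<in> l2 \<Longrightarrow> v \<in> l2 \<Longrightarrow> bdd_op (X e t u v)"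
  unfolding X_def' by (rule partial_op_char(1)[OF Dm_bdd])

lemma X_l2: "0 \<le> t \<Longrightarrow> u \<in> l2 \<Longrightarrow> v \<in> l2 \<Longrightarrow> \<xi> \<in> l2 \<Longrightarrow> X e t u v \<xi> \<in> l2"
  using X_bdd bdd_l2 by blast

lemma X_char: "0 \<le> t \<Longrightarrow> u \<in> l2 \<Longrightarrow> v \<in> l2 \<Longrightarrow> \<xi> \<in> l2 \<Longrightarrow> X e t u v \<xi> = contr u (Dm e t (tensor v \<xi>))"
  unfolding X_def' by (rule partial_op_char(2)[OF Dm_bdd])

lemma X_inner: "0 \<le> t \<Longrightarrow> u \<in> l2 \<Longrightarrow> v \<in> l2 \<Longrightarrow> \<xi>1 \<in> l2 \<Longrightarrow> \<xi>2 \<in> l2 \<Longrightarrow>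
   l2_inner \<xi>1 (X e t u v \<xi>2) = l2_inner (tensor u \<xi>1) (Dm e t (tensor v \<xi>2))"
  unfolding X_def' by (rule partial_op_inner[OF Dm_bdd])

lemma X_adj: assumes t: "0 \<le> t" and u: "u \<in> l2" and v: "v \<in> l2" and \<xi>: "\<xi> \<in> l2" and \<eta>: "\<eta> \<in> l2"
  shows "l2_inner (X e t u v \<xi>) \<eta> = l2_inner \<xi> (X (\<not> e) t v u \<eta>)"
proof -
  have "l2_inner (X e t u v \<xi>) \<eta> = cnj (l2_inner \<eta> (X e t u v \<xi>))" by (rule inner_cnj)
  also have "\<dots> = cnj (l2_inner (tensor u \<eta>) (Dm e t (tensor v \<xi>)))" using X_inner[OF t u v \<eta> \<xi>] by simp
  also have "\<dots> = l2_inner (Dm e t (tensor v \<xi>)) (tensor u \<eta>)" by (simp add: inner_cnj[of "Dm e t (tensor v \<xi>)"])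
  also have "\<dots> = l2_inner (tensor v \<xi>) (Dm (\<not> e) t (tensor u \<eta>))"
    by (rule Dm_adj[OF t tensor_l2[OF v \<xi>] tensor_l2[OF u \<eta>]])
  also have "\<dots> = l2_inner \<xi> (X (\<not> e) t v u \<eta>)" using X_inner[OF t v u \<xi> \<eta>] by simp
  finally show ?thesis .
qed

lemma X_adj': assumes t: "0 \<le> t" and u: "u \<in> l2" and v: "v \<in> l2" and \<xi>: "\<xi> \<in> l2" and \<eta>: "\<eta> \<in> l2"
  shows "l2_inner \<xi> (X e t u v \<eta>) = l2_inner (X (\<not> e) t v u \<xi>) \<eta>"
  using X_adj[OF t v u \<xi> \<eta>, of "\<not> e"] by simp

lemma X_norm: assumes t: "0 \<le> t" and u: "u \<in> l2" and v: "v \<in> l2" and \<xi>: "\<xi> \<in> l2"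
  shows "l2_norm (X e t u v \<xi>) \<le> l2_norm u * l2_norm (Dm e t (tensor v \<xi>))"
  unfolding X_char[OF t u v \<xi>] by (rule contr_norm[OF u Dm_l2[OF t tensor_l2[OF v \<xi>]]])

lemma X_sq: assumes t: "0 \<le> t" and u: "u \<in> l2" and v: "v \<in> l2" and \<xi>: "\<xi> \<in> l2"
  shows "(l2_norm (X e t u v \<xi>))\<^sup>2 \<le> (l2_norm u)\<^sup>2 * (- 2 * Re (l2_inner \<xi> (X e t v v \<xi>)))"
proof -
  have "(l2_norm (X e t u v \<xi>))\<^sup>2 \<le> (l2_norm u * l2_norm (Dm e t (tensor v \<xi>)))\<^sup>2"
    by (rule power_mono[OF X_norm[OF assms] l2_norm_nonneg])
  also have "\<dots> = (l2_norm u)\<^sup>2 * (- 2 * Re (l2_inner (tensor v \<xi>) (Dm e t (tensor v \<xi>))))"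
    by (simp add: power_mult_distrib Dm_norm_sq[OF t tensor_l2[OF v \<xi>]])
  also have "l2_inner (tensor v \<xi>) (Dm e t (tensor v \<xi>)) = l2_inner \<xi> (X e t v v \<xi>)"
    using X_inner[OF t v v \<xi> \<xi>] by simp
  finally show ?thesis .
qed

lemma X_bound: assumes t: "0 \<le> t" and u: "u \<in> l2" and v: "v \<in> l2" and \<xi>: "\<xi> \<in> l2"
  shows "l2_norm (X e t u v \<xi>) \<le> (2 * l2_norm u * l2_norm v) * l2_norm \<xi>"
proof -
  have "l2_norm (Dm e t (tensor v \<xi>)) \<le> 2 * l2_norm (tensor v \<xi>)"
    unfolding Dm_def using l2_norm_diff_triangle[OF W_l2[OF t tensor_l2[OF v \<xi>]] tensor_l2[OF v \<xi>]]
      W_norm[OF t tensor_l2[OF v \<xi>]] by simp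
  then have "l2_norm u * l2_norm (Dm e t (tensor v \<xi>)) \<le> l2_norm u * (2 * (l2_norm v * l2_norm \<xi>))"
    using tensor_norm[OF v \<xi>] l2_norm_nonneg[of u] by (simp add: mult_left_mono)
  then show ?thesis using X_norm[OF assms, of e] by (simp add: ac_simps)
qed

lemma fact_op_X: assumes t: "0 \<le> t" and p: "p \<in> l2" and w: "w \<in> l2" and \<xi>: "\<xi> \<in> l2"
  shows "fact_op U e 0 t p w \<xi> = (\<lambda>j. X e t p w \<xi> j + l2_inner p w * \<xi> j)"
proof -
  have "fact_op U e 0 t p w \<xi> = contr p (W e t (tensor w \<xi>))"
    unfolding fact_op_def W_def[symmetric] by (rule partial_op_char(2)[OF W_bdd[OF t] p w \<xi>])
  moreover have "X e t p w \<xi> = (\<lambda>j. contr p (W e t (tensor w \<xi>)) j - l2_inner p w * \<xi> j)"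
    unfolding X_char[OF t p w \<xi>] Dm_def
    using contr_diff[OF p W_l2[OF t tensor_l2[OF w \<xi>]] tensor_l2[OF w \<xi>]] by (simp add: contr_tensor)
  ultimately show ?thesis by simp
qed

lemma fact_op_l2: assumes "0 \<le> t" "p \<in> l2" "w \<in> l2" "\<xi> \<in> l2" shows "fact_op U e 0 t p w \<xi> \<in> l2"
  unfolding fact_op_X[OF assms] by (rule l2_add[OF X_l2[OF assms] l2_scale[OF assms(4)]])

end



context evo begin

definition Xw :: "real \<Rightarrow> (bool \<times> ('a \<Rightarrow> complex) \<times> ('a \<Rightarrow> complex)) list \<Rightarrow> ('b \<Rightarrow> complex) \<Rightarrow> ('b \<Rightarrow> complex)" where
  "Xw t xs = foldr (\<lambda>(e, u, v) X. fact_m1 U e 0 t u v \<circ> X) xs id"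

lemma Xw_Nil[simp]: "Xw t [] = id" by (simp add: Xw_def)
lemma Xw_Cons[simp]: "Xw t ((e,u,v) # xs) = X e t u v \<circ> Xw t xs" by (simp add: Xw_def)

lemma Xw_append: "Xw t (xs @ ys) = Xw t xs \<circ> Xw t ys"
  by (induction xs) (auto simp: Xw_def)

lemma vok_Cons[simp]: "vecs_ok' ((e,u,v) # xs) \<longleftrightarrow> u \<in> l2 \<and> v \<in> l2 \<and> vecs_ok' xs"
  by (auto simp: vecs_ok'_def)
lemma vok_Nil[simp]: "vecs_ok' []" by (simp add: vecs_ok'_def)
lemma vok_append[simp]: "vecs_ok' (xs @ ys) \<longleftrightarrow> vecs_ok' xs \<and> vecs_ok' ys"
  by (simp add: vecs_ok'_def ball_Un)

lemma Xw_l2: "0 \<le> t \<Longrightarrow> vecs_ok' xs \<Longrightarrow> \<xi> \<in> l2 \<Longrightarrow> Xw t xs \<xi> \<in> l2"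
proof (induction xs)
  case (Cons x xs) then show ?case by (cases x) (auto intro: X_l2)
qed simp

definition Kw :: "(bool \<times> ('a \<Rightarrow> complex) \<times> ('a \<Rightarrow> complex)) list \<Rightarrow> real" where
  "Kw xs = prod_list (map (\<lambda>(e,u,v). 2 * l2_norm u * l2_norm v) xs)"

lemma Kw_nonneg: "0 \<le> Kw xs"
  unfolding Kw_def by (induction xs) (auto simp: l2_norm_nonneg)

lemma Xw_norm: "0 \<le> t \<Longrightarrow> vecs_ok' xs \<Longrightarrow> \<xi> \<in> l2 \<Longrightarrow> l2_norm (Xw t xs \<xi>) \<le> Kw xs * l2_norm \<xi>"
proof (induction xs)
  case Nil then show ?case by (simp add: Kw_def)
next
  case (Cons x xs)
  obtain e u v where x: "x = (e,u,v)" by (cases x)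
  have u: "u \<in> l2" and v: "v \<in> l2" and ok: "vecs_ok' xs" using Cons.prems x by auto
  have "l2_norm (Xw t (x # xs) \<xi>) = l2_norm (X e t u v (Xw t xs \<xi>))" using x by simp
  also have "\<dots> \<le> (2 * l2_norm u * l2_norm v) * l2_norm (Xw t xs \<xi>)"
    by (rule X_bound[OF Cons.prems(1) u v Xw_l2[OF Cons.prems(1) ok Cons.prems(3)]])
  also have "\<dots> \<le> (2 * l2_norm u * l2_norm v) * (Kw xs * l2_norm \<xi>)"
    using Cons.IH[OF Cons.prems(1) ok Cons.prems(3)] l2_norm_nonneg[of u] l2_norm_nonneg[of v]
    by (intro mult_left_mono) auto
  finally show ?case using x by (simp add: Kw_def ac_simps)
qed

definition adjw :: "(bool \<times> ('a \<Rightarrow> complex) \<times> ('a \<Rightarrow> complex)) list \<Rightarrow> (bool \<times> ('a \<Rightarrow> complex) \<times> ('a \<Rightarrow> complex)) list" where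
  "adjw xs = rev (map (\<lambda>(e,u,v). (\<not> e, v, u)) xs)"

lemma adjw_Cons[simp]: "adjw ((e,u,v) # xs) = adjw xs @ [(\<not> e, v, u)]"
  by (simp add: adjw_def)
lemma adjw_Nil[simp]: "adjw [] = []" by (simp add: adjw_def)
lemma adjw_ok: "vecs_ok' xs \<Longrightarrow> vecs_ok' (adjw xs)"
  by (auto simp: adjw_def vecs_ok'_def)
lemma adjw_length[simp]: "length (adjw xs) = length xs" by (simp add: adjw_def)

lemma Xw_adj: "0 \<le> t \<Longrightarrow> vecs_ok' xs \<Longrightarrow> \<xi> \<in> l2 \<Longrightarrow> \<eta> \<in> l2 \<Longrightarrow>
    l2_inner (Xw t xs \<xi>) \<eta> = l2_inner \<xi> (Xw t (adjw xs) \<eta>)"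
proof (induction xs arbitrary: \<eta>)
  case Nil then show ?case by simp
next
  case (Cons x xs)
  obtain e u v where x: "x = (e,u,v)" by (cases x)
  have u: "u \<in> l2" and v: "v \<in> l2" and ok: "vecs_ok' xs" using Cons.prems x by auto
  have "l2_inner (Xw t (x # xs) \<xi>) \<eta> = l2_inner (X e t u v (Xw t xs \<xi>)) \<eta>" using x by simp
  also have "\<dots> = l2_inner (Xw t xs \<xi>) (X (\<not> e) t v u \<eta>)"
    by (rule X_adj[OF Cons.prems(1) u v Xw_l2[OF Cons.prems(1) ok Cons.prems(3)] Cons.prems(4)])
  also have "\<dots> = l2_inner \<xi> (Xw t (adjw xs) (X (\<not> e) t v u \<eta>))"
    by (rule Cons.IH[OF Cons.prems(1) ok Cons.prems(3) X_l2[OF Cons.prems(1) v u Cons.prems(4)]])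
  finally show ?case using x by (simp add: Xw_append)
qed

lemma expect_Xw: "expect \<Omega> (Xw t xs) = l2_inner \<Omega> (Xw t xs \<Omega>)"
  by (simp add: expect_def)

lemma three:
  assumes CC: "C U \<Omega>" and ok: "vecs_ok' xs" and len: "length xs = 3"
  shows "((\<lambda>t. expect \<Omega> (Xw t xs) / complex_of_real t) \<longlongrightarrow> 0) (at_right 0)"
proof -
  obtain a b c where abc: "xs = [a,b,c]" using len
    by (auto simp: numeral_3_eq_3 length_Suc_conv)
  obtain e1 u1 v1 e2 u2 v2 e3 u3 v3 where
    x: "a = (e1,u1,v1)" "b = (e2,u2,v2)" "c = (e3,u3,v3)" by (cases a, cases b, cases c) auto
  have l: "u1 \<in> l2" "v1 \<in> l2" "u2 \<in> l2" "v2 \<in> l2" "u3 \<in> l2" "v3 \<in> l2" using ok abc x by auto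
  have "((\<lambda>t. expect \<Omega> (X e1 t u1 v1 \<circ> X e2 t u2 v2 \<circ> X e3 t u3 v3) / complex_of_real t) \<longlongrightarrow> 0) (at_right 0)"
    using CC l unfolding C_def by blast
  moreover have "Xw t xs = X e1 t u1 v1 \<circ> X e2 t u2 v2 \<circ> X e3 t u3 v3" for t
    using abc x by (simp add: o_assoc)
  ultimately show ?thesis by simp
qed

lemma split_last2: assumes "2 \<le> length ys" shows "\<exists>mid a b. ys = mid @ [a, b]"
proof -
  obtain zs b where zs: "ys = zs @ [b]" using assms by (cases ys rule: rev_exhaust) auto
  then have "zs \<noteq> []" using assms by auto
  then obtain mid a where "zs = mid @ [a]" by (cases zs rule: rev_exhaust) auto
  then show ?thesis using zs by auto
qed

lemma neg_Re_le: "- 2 * Re z \<le> 2 * cmod z"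
  using abs_Re_le_cmod[of z] by linarith

lemma part_i:
  assumes CC: "C U \<Omega>" and ok: "vecs_ok' xs" and len: "3 \<le> length xs"
  shows "((\<lambda>t. expect \<Omega> (Xw t xs) / complex_of_real t) \<longlongrightarrow> 0) (at_right 0)"
proof (cases "length xs = 3")
  case True then show ?thesis using three[OF CC ok] by simp
next
  case False
  then have len4: "4 \<le> length xs" using len by simp
  obtain x1 x2 rest where xs: "xs = x1 # x2 # rest"
    using len by (auto simp: numeral_3_eq_3 Suc_le_length_iff)
  have "2 \<le> length rest" using len4 xs by simp
  then obtain mid xa xb where rest: "rest = mid @ [xa, xb]" using split_last2 by blast
  obtain e1 u1 v1 where x1: "x1 = (e1,u1,v1)" by (cases x1)
  obtain e2 u2 v2 where x2: "x2 = (e2,u2,v2)" by (cases x2)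
  obtain ea ua va where xa: "xa = (ea,ua,va)" by (cases xa)
  obtain eb ub vb where xb: "xb = (eb,ub,vb)" by (cases xb)
  have l: "u1 \<in> l2" "v1 \<in> l2" "u2 \<in> l2" "v2 \<in> l2" "ua \<in> l2" "va \<in> l2" "ub \<in> l2" "vb \<in> l2"
    and okmid: "vecs_ok' mid" using ok xs rest x1 x2 xa xb by auto
  define ws1 where "ws1 = [x1, (\<not> e2, u2, u2), (\<not> e1, v1, u1)]"
  define ws2 where "ws2 = [(\<not> eb, vb, ub), (ea, va, va), xb]"
  have ok1: "vecs_ok' ws1" and ok2: "vecs_ok' ws2" using l x1 xb by (auto simp: ws1_def ws2_def)
  have T1: "((\<lambda>t. expect \<Omega> (Xw t ws1) / complex_of_real t) \<longlongrightarrow> 0) (at_right 0)"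
    by (rule three[OF CC ok1]) (simp add: ws1_def)
  have T2: "((\<lambda>t. expect \<Omega> (Xw t ws2) / complex_of_real t) \<longlongrightarrow> 0) (at_right 0)"
    by (rule three[OF CC ok2]) (simp add: ws2_def)
  define K where "K = 4 * (Kw mid)\<^sup>2 * (l2_norm v2)\<^sup>2 * (l2_norm ua)\<^sup>2"
  have bound: "(cmod (expect \<Omega> (Xw t xs) / complex_of_real t))\<^sup>2
      \<le> K * (cmod (expect \<Omega> (Xw t ws1) / complex_of_real t) * cmod (expect \<Omega> (Xw t ws2) / complex_of_real t))"
    if t: "0 < t" for t
  proof -
    have t0: "0 \<le> t" using t by simp
    define \<alpha> where "\<alpha> = X (\<not> e1) t v1 u1 \<Omega>"
    define \<beta> where "\<beta> = X (\<not> e2) t v2 u2 \<alpha>"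
    define \<gamma> where "\<gamma> = X ea t ua va (X eb t ub vb \<Omega>)"
    have \<alpha>l: "\<alpha> \<in> l2" unfolding \<alpha>_def by (rule X_l2[OF t0 l(2,1) Om])
    have \<beta>l: "\<beta> \<in> l2" unfolding \<beta>_def by (rule X_l2[OF t0 l(4,3) \<alpha>l])
    have XbO: "X eb t ub vb \<Omega> \<in> l2" by (rule X_l2[OF t0 l(7,8) Om])
    have \<gamma>l: "\<gamma> \<in> l2" unfolding \<gamma>_def by (rule X_l2[OF t0 l(5,6) XbO])
    have RO: "Xw t rest \<Omega> = Xw t mid \<gamma>" using rest xa xb by (simp add: Xw_append \<gamma>_def)
    have ROl: "Xw t rest \<Omega> \<in> l2" unfolding RO by (rule Xw_l2[OF t0 okmid \<gamma>l])
    have X2l: "X e2 t u2 v2 (Xw t rest \<Omega>) \<in> l2" by (rule X_l2[OF t0 l(3,4) ROl])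
    have E: "expect \<Omega> (Xw t xs) = l2_inner \<beta> (Xw t rest \<Omega>)"
    proof -
      have "expect \<Omega> (Xw t xs) = l2_inner \<Omega> (X e1 t u1 v1 (X e2 t u2 v2 (Xw t rest \<Omega>)))"
        using xs x1 x2 by (simp add: expect_def)
      also have "\<dots> = l2_inner \<alpha> (X e2 t u2 v2 (Xw t rest \<Omega>))"
        unfolding \<alpha>_def by (rule X_adj'[OF t0 l(1,2) Om X2l])
      also have "\<dots> = l2_inner \<beta> (Xw t rest \<Omega>)"
        unfolding \<beta>_def by (rule X_adj'[OF t0 l(3,4) \<alpha>l ROl])
      finally show ?thesis .
    qed
    have E1: "l2_inner \<alpha> (X (\<not> e2) t u2 u2 \<alpha>) = expect \<Omega> (Xw t ws1)"
    proof -
      have "l2_inner \<alpha> (X (\<not> e2) t u2 u2 \<alpha>) = l2_inner \<Omega> (X e1 t u1 v1 (X (\<not> e2) t u2 u2 \<alpha>))"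
        unfolding \<alpha>_def using X_adj[OF t0 l(2,1) Om X_l2[OF t0 l(3,3) \<alpha>l[unfolded \<alpha>_def]], of "\<not> e1"] by simp
      then show ?thesis by (simp add: ws1_def x1 expect_def \<alpha>_def)
    qed
    have E2: "l2_inner (X eb t ub vb \<Omega>) (X ea t va va (X eb t ub vb \<Omega>)) = expect \<Omega> (Xw t ws2)"
      using X_adj[OF t0 l(7,8) Om X_l2[OF t0 l(6,6) XbO]] by (simp add: ws2_def xb expect_def)
    have nb: "(l2_norm \<beta>)\<^sup>2 \<le> (l2_norm v2)\<^sup>2 * (2 * cmod (expect \<Omega> (Xw t ws1)))"
    proof -
      have a: "(l2_norm \<beta>)\<^sup>2 \<le> (l2_norm v2)\<^sup>2 * (- 2 * Re (expect \<Omega> (Xw t ws1)))"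
        using X_sq[OF t0 l(4,3) \<alpha>l, of "\<not> e2"] unfolding E1 \<beta>_def .
      show ?thesis by (rule order_trans[OF a mult_left_mono[OF neg_Re_le zero_le_power2]])
    qed
    have ng: "(l2_norm \<gamma>)\<^sup>2 \<le> (l2_norm ua)\<^sup>2 * (2 * cmod (expect \<Omega> (Xw t ws2)))"
    proof -
      have a: "(l2_norm \<gamma>)\<^sup>2 \<le> (l2_norm ua)\<^sup>2 * (- 2 * Re (expect \<Omega> (Xw t ws2)))"
        using X_sq[OF t0 l(5,6) XbO, of ea] unfolding E2 \<gamma>_def .
      show ?thesis by (rule order_trans[OF a mult_left_mono[OF neg_Re_le zero_le_power2]])
    qed
    have "cmod (expect \<Omega> (Xw t xs)) \<le> l2_norm \<beta> * l2_norm (Xw t rest \<Omega>)"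
      unfolding E by (rule cauchy_schwarz[OF \<beta>l ROl])
    also have "\<dots> \<le> l2_norm \<beta> * (Kw mid * l2_norm \<gamma>)"
      unfolding RO using Xw_norm[OF t0 okmid \<gamma>l] l2_norm_nonneg[of \<beta>] by (rule mult_left_mono)
    finally have "(cmod (expect \<Omega> (Xw t xs)))\<^sup>2 \<le> (l2_norm \<beta> * (Kw mid * l2_norm \<gamma>))\<^sup>2"
      by (simp add: power_mono)
    also have "\<dots> = (Kw mid)\<^sup>2 * ((l2_norm \<beta>)\<^sup>2 * (l2_norm \<gamma>)\<^sup>2)" by (simp add: power_mult_distrib)
    also have "\<dots> \<le> (Kw mid)\<^sup>2 * (((l2_norm v2)\<^sup>2 * (2 * cmod (expect \<Omega> (Xw t ws1)))) * ((l2_norm ua)\<^sup>2 * (2 * cmod (expect \<Omega> (Xw t ws2)))))"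
      by (intro mult_left_mono mult_mono nb ng) auto
    also have "\<dots> = K * (cmod (expect \<Omega> (Xw t ws1)) * cmod (expect \<Omega> (Xw t ws2)))"
      by (simp add: K_def)
    finally have "(cmod (expect \<Omega> (Xw t xs)))\<^sup>2 \<le> K * (cmod (expect \<Omega> (Xw t ws1)) * cmod (expect \<Omega> (Xw t ws2)))" .
    then have "(cmod (expect \<Omega> (Xw t xs)))\<^sup>2 / t\<^sup>2 \<le> K * (cmod (expect \<Omega> (Xw t ws1)) * cmod (expect \<Omega> (Xw t ws2))) / t\<^sup>2"
      using t by (simp add: divide_right_mono)
    then show ?thesis using t by (simp add: norm_divide power_divide power2_eq_square field_simps)
  qed
  have lim: "((\<lambda>t. K * (cmod (expect \<Omega> (Xw t ws1) / complex_of_real t) * cmod (expect \<Omega> (Xw t ws2) / complex_of_real t))) \<longlongrightarrow> 0) (at_right 0)"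
    using tendsto_mult[OF tendsto_norm[OF T1] tendsto_norm[OF T2]] tendsto_mult_left[where c=K] by fastforce
  have sq: "((\<lambda>t. (cmod (expect \<Omega> (Xw t xs) / complex_of_real t))\<^sup>2) \<longlongrightarrow> 0) (at_right 0)"
  proof (rule Lim_null_comparison[OF _ lim])
    show "\<forall>\<^sub>F t in at_right 0. norm ((cmod (expect \<Omega> (Xw t xs) / complex_of_real t))\<^sup>2)
        \<le> K * (cmod (expect \<Omega> (Xw t ws1) / complex_of_real t) * cmod (expect \<Omega> (Xw t ws2) / complex_of_real t))"
      using bound eventually_at_right_less[of 0] by (auto elim!: eventually_mono)
  qed
  have "((\<lambda>t. sqrt ((cmod (expect \<Omega> (Xw t xs) / complex_of_real t))\<^sup>2)) \<longlongrightarrow> sqrt 0) (at_right 0)"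
    by (rule tendsto_real_sqrt[OF sq])
  then have "((\<lambda>t. cmod (expect \<Omega> (Xw t xs) / complex_of_real t)) \<longlongrightarrow> 0) (at_right 0)" by simp
  then show ?thesis by (rule tendsto_norm_zero_cancel)
qed

end



definition Aprod :: "(bool \<times> ('a \<Rightarrow> complex) \<times> ('a \<Rightarrow> complex)) list \<Rightarrow> complex" where
  "Aprod ys = (\<Prod>(e, p, w)\<leftarrow>ys. l2_inner p w)"

fun Lexp :: "(bool \<times> ('a \<Rightarrow> complex) \<times> ('a \<Rightarrow> complex)) list \<Rightarrow> (complex \<times> (bool \<times> ('a \<Rightarrow> complex) \<times> ('a \<Rightarrow> complex)) list) list" where
  "Lexp [] = []"
| "Lexp ((e,p,w) # ys) = map (\<lambda>(c,ws). (c, (e,p,w) # ws)) (Lexp ys) @ [(Aprod ys, [(e,p,w)])]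
      @ map (\<lambda>(c,ws). (l2_inner p w * c, ws)) (Lexp ys)"

lemma Lexp_words: "(c, ws) \<in> set (Lexp ys) \<Longrightarrow> ws \<noteq> [] \<and> set ws \<subseteq> set ys"
proof (induction ys arbitrary: c ws rule: Lexp.induct)
  case 1 then show ?case by simp
next
  case (2 e p w ys)
  have "(c,ws) \<in> (\<lambda>(c,ws). (c,(e,p,w)#ws)) ` set (Lexp ys) \<or> (c,ws) = (Aprod ys, [(e,p,w)])
     \<or> (c,ws) \<in> (\<lambda>(c,ws). (l2_inner p w * c, ws)) ` set (Lexp ys)" using 2(3) by force
  then show ?case
  proof (elim disjE imageE)
    fix x assume x: "x \<in> set (Lexp ys)" "(c, ws) = (case x of (c, ws) \<Rightarrow> (c, (e, p, w) # ws))"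
    obtain c' ws' where xx: "x = (c', ws')" by (cases x)
    have h: "ws' \<noteq> [] \<and> set ws' \<subseteq> set ys" using 2(1)[of c' ws'] x xx by simp
    have "ws = (e,p,w) # ws'" using x xx by simp
    then show ?thesis using h by (simp add: subset_insertI2)
  next
    fix x assume x: "x \<in> set (Lexp ys)" "(c, ws) = (case x of (c, ws) \<Rightarrow> (l2_inner p w * c, ws))"
    obtain c' ws' where xx: "x = (c', ws')" by (cases x)
    have h: "ws' \<noteq> [] \<and> set ws' \<subseteq> set ys" using 2(2)[of c' ws'] x xx by simp
    have "ws = ws'" using x xx by simp
    then show ?thesis using h by (simp add: subset_insertI2)
  qed auto
qed

lemma Lexp_ok: "vecs_ok' ys \<Longrightarrow> (c, ws) \<in> set (Lexp ys) \<Longrightarrow> vecs_ok' ws"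
  using Lexp_words unfolding vecs_ok'_def by blast

lemma Aprod_Cons[simp]: "Aprod ((e,p,w) # ys) = l2_inner p w * Aprod ys"
  by (simp add: Aprod_def)

lemma l2_sum_list: "(\<And>x. x \<in> set L \<Longrightarrow> F x \<in> l2) \<Longrightarrow> (\<lambda>j. \<Sum>x\<leftarrow>L. F x j) \<in> l2"
proof (induction L)
  case Nil then show ?case using l2_zero by simp
next
  case (Cons a L) then show ?case using l2_add[of "F a" "\<lambda>j. \<Sum>x\<leftarrow>L. F x j"] by simp
qed

lemma inner_sum_list_left: "(\<And>x. x \<in> set L \<Longrightarrow> F x \<in> l2) \<Longrightarrow> g \<in> l2 \<Longrightarrow>
    l2_inner (\<lambda>j. \<Sum>x\<leftarrow>L. F x j) g = (\<Sum>x\<leftarrow>L. l2_inner (F x) g)"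
proof (induction L)
  case Nil then show ?case using inner_zero_left by simp
next
  case (Cons a L)
  then show ?case using inner_add_left[of "F a" "\<lambda>j. \<Sum>x\<leftarrow>L. F x j" g] l2_sum_list[of L F] by simp
qed

lemma inner_sum_list_right: "(\<And>x. x \<in> set L \<Longrightarrow> F x \<in> l2) \<Longrightarrow> g \<in> l2 \<Longrightarrow>
    l2_inner g (\<lambda>j. \<Sum>x\<leftarrow>L. F x j) = (\<Sum>x\<leftarrow>L. l2_inner g (F x))"
proof (induction L)
  case Nil then show ?case using inner_zero_right by simp
next
  case (Cons a L)
  then show ?case using inner_add_right[of g "F a" "\<lambda>j. \<Sum>x\<leftarrow>L. F x j"] l2_sum_list[of L F] by simp
qed

lemma bdd_sum_list: "bdd_op A \<Longrightarrow> (\<And>x. x \<in> set L \<Longrightarrow> F x \<in> l2) \<Longrightarrow>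
    A (\<lambda>j. \<Sum>x\<leftarrow>L. F x j) = (\<lambda>j. \<Sum>x\<leftarrow>L. A (F x) j)"
proof (induction L)
  case Nil then show ?case using bdd_zero by simp
next
  case (Cons a L)
  then show ?case using bdd_add[of A "F a" "\<lambda>j. \<Sum>x\<leftarrow>L. F x j"] l2_sum_list[of L F] by simp
qed

lemma tendsto_sum_list_zero:
  fixes f :: "'x \<Rightarrow> real \<Rightarrow> complex"
  shows "(\<And>x. x \<in> set L \<Longrightarrow> (f x \<longlongrightarrow> 0) F) \<Longrightarrow> ((\<lambda>t. \<Sum>x\<leftarrow>L. f x t) \<longlongrightarrow> 0) F"
proof (induction L)
  case Nil then show ?case by simp
next
  case (Cons a L) then show ?case using tendsto_add[of "f a" 0 F "\<lambda>t. \<Sum>x\<leftarrow>L. f x t" 0] by simp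
qed

context evo begin

definition vs :: "real \<Rightarrow> (complex \<times> (bool \<times> ('a \<Rightarrow> complex) \<times> ('a \<Rightarrow> complex)) list) list \<Rightarrow> ('b \<Rightarrow> complex) \<Rightarrow> ('b \<Rightarrow> complex)" where
  "vs t L \<xi> = (\<lambda>j. \<Sum>x\<leftarrow>L. (case x of (c, ws) \<Rightarrow> (\<lambda>j. c * Xw t ws \<xi> j)) j)"

definition Lok :: "(complex \<times> (bool \<times> ('a \<Rightarrow> complex) \<times> ('a \<Rightarrow> complex)) list) list \<Rightarrow> bool"
  where "Lok L \<longleftrightarrow> (\<forall>x\<in>set L. vecs_ok' (snd x))"

lemma Lok_Nil[simp]: "Lok []" by (simp add: Lok_def)
lemma Lok_Cons[simp]: "Lok ((c,ws) # L) \<longleftrightarrow> vecs_ok' ws \<and> Lok L" by (simp add: Lok_def)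

lemma Lok_Lexp: "vecs_ok' ys \<Longrightarrow> Lok (Lexp ys)"
  unfolding Lok_def using Lexp_ok by (metis prod.collapse)

lemma vs_Nil[simp]: "vs t [] \<xi> = (\<lambda>j. 0)" by (simp add: vs_def)

lemma vs_Cons: "vs t ((c,ws) # L) \<xi> = (\<lambda>j. c * Xw t ws \<xi> j + vs t L \<xi> j)"
  by (simp add: vs_def)

lemma vs_l2: "0 \<le> t \<Longrightarrow> Lok L \<Longrightarrow> \<xi> \<in> l2 \<Longrightarrow> vs t L \<xi> \<in> l2"
proof (induction L)
  case Nil then show ?case using l2_zero by simp
next
  case (Cons x L)
  then show ?case by (cases x) (auto simp: vs_Cons intro!: l2_add l2_scale Xw_l2)
qed

lemma vs_append: "vs t (L1 @ L2) \<xi> = (\<lambda>j. vs t L1 \<xi> j + vs t L2 \<xi> j)"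
  by (simp add: vs_def)

lemma vs_scale: "vs t (map (\<lambda>(c,ws). (a * c, ws)) L) \<xi> = (\<lambda>j. a * vs t L \<xi> j)"
proof (induction L)
  case (Cons x L) then show ?case by (cases x) (simp add: vs_Cons distrib_left mult.assoc)
qed simp

lemma X_vs: assumes t: "0 \<le> t" and p: "p \<in> l2" and w: "w \<in> l2" and \<xi>: "\<xi> \<in> l2"
  shows "Lok L \<Longrightarrow> X e t p w (vs t L \<xi>) = vs t (map (\<lambda>(c,ws). (c, (e,p,w) # ws)) L) \<xi>"
proof (induction L)
  case Nil then show ?case using bdd_zero[OF X_bdd[OF t p w]] by simp
next
  case (Cons x L)
  obtain c ws where x: "x = (c, ws)" by (cases x)
  have ok: "vecs_ok' ws" and L: "Lok L" using Cons.prems x by auto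
  have "X e t p w (vs t (x # L) \<xi>) = X e t p w (\<lambda>j. c * Xw t ws \<xi> j + vs t L \<xi> j)"
    using x by (simp add: vs_Cons)
  also have "\<dots> = (\<lambda>j. X e t p w (\<lambda>j. c * Xw t ws \<xi> j) j + X e t p w (vs t L \<xi>) j)"
    by (rule bdd_add[OF X_bdd[OF t p w] l2_scale[OF Xw_l2[OF t ok \<xi>]] vs_l2[OF t L \<xi>]])
  also have "\<dots> = (\<lambda>j. c * X e t p w (Xw t ws \<xi>) j + X e t p w (vs t L \<xi>) j)"
    using bdd_scale[OF X_bdd[OF t p w] Xw_l2[OF t ok \<xi>], where c=c] by simp
  finally show ?case using x Cons.IH[OF L] by (simp add: vs_Cons)
qed

abbreviation P where "P t ys \<equiv> prod_op U (map (\<lambda>(e, p, w). (e, 0, t, p, w)) ys)"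

lemma P_Cons': "prod_op U ((e,a,b,p,w) # xs) = fact_op U e a b p w \<circ> prod_op U xs" by (simp add: prod_op_def)
lemma P_Nil: "P t [] = id" by (simp add: prod_op_def)
lemma P_Nil': "prod_op U [] = id" by (simp add: prod_op_def)
lemma P_Cons: "P t ((e,p,w) # ys) = fact_op U e 0 t p w \<circ> P t ys" by (simp add: prod_op_def)

lemma P_l2: "0 \<le> t \<Longrightarrow> vecs_ok' ys \<Longrightarrow> \<xi> \<in> l2 \<Longrightarrow> P t ys \<xi> \<in> l2"
proof (induction ys)
  case Nil then show ?case by (simp add: P_Nil')
next
  case (Cons y ys) then show ?case by (cases y) (auto simp: P_Cons' intro!: fact_op_l2)
qed

lemma P_expand: "0 \<le> t \<Longrightarrow> vecs_ok' ys \<Longrightarrow> \<xi> \<in> l2 \<Longrightarrow> P t ys \<xi> = (\<lambda>j. vs t (Lexp ys) \<xi> j + Aprod ys * \<xi> j)"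
proof (induction ys)
  case Nil then show ?case by (simp add: P_Nil' Aprod_def)
next
  case (Cons y ys)
  obtain e p w where y: "y = (e,p,w)" by (cases y)
  have t: "0 \<le> t" and \<xi>: "\<xi> \<in> l2" and p: "p \<in> l2" and w: "w \<in> l2" and ok: "vecs_ok' ys"
    using Cons.prems y by auto
  define L where "L = Lexp ys"
  have L: "Lok L" unfolding L_def by (rule Lok_Lexp[OF ok])
  have IH: "P t ys \<xi> = (\<lambda>j. vs t L \<xi> j + Aprod ys * \<xi> j)" unfolding L_def by (rule Cons.IH[OF t ok \<xi>])
  have vl: "vs t L \<xi> \<in> l2" by (rule vs_l2[OF t L \<xi>])
  have A: "P t ((e,p,w) # ys) \<xi> = (\<lambda>j. X e t p w (P t ys \<xi>) j + l2_inner p w * P t ys \<xi> j)"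
    unfolding P_Cons' list.map prod.case comp_def by (rule fact_op_X[OF t p w P_l2[OF t ok \<xi>]])
  have B0: "X e t p w (P t ys \<xi>) = (\<lambda>j. X e t p w (vs t L \<xi>) j + Aprod ys * X e t p w \<xi> j)"
    unfolding IH using bdd_add[OF X_bdd[OF t p w] vl l2_scale[OF \<xi>, of "Aprod ys"]]
      bdd_scale[OF X_bdd[OF t p w] \<xi>, where c="Aprod ys"] by simp
  have B: "X e t p w (P t ys \<xi>) = (\<lambda>j. vs t (map (\<lambda>(c,ws). (c, (e,p,w) # ws)) L) \<xi> j + Aprod ys * X e t p w \<xi> j)"
    unfolding B0 X_vs[OF t p w \<xi> L] ..
  have 1: "P t ((e,p,w) # ys) \<xi> = (\<lambda>j. vs t (map (\<lambda>(c,ws). (c, (e,p,w) # ws)) L) \<xi> j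
      + Aprod ys * X e t p w \<xi> j + l2_inner p w * (vs t L \<xi> j + Aprod ys * \<xi> j))"
    unfolding A B unfolding IH ..
  have 2: "vs t (Lexp ((e,p,w) # ys)) \<xi> = (\<lambda>j. vs t (map (\<lambda>(c,ws). (c, (e,p,w) # ws)) L) \<xi> j
      + Aprod ys * X e t p w \<xi> j + l2_inner p w * vs t L \<xi> j)"
  proof -
    have LE: "Lexp ((e,p,w) # ys) = map (\<lambda>(c,ws). (c, (e,p,w) # ws)) L @ [(Aprod ys, [(e,p,w)])]
        @ map (\<lambda>(c,ws). (l2_inner p w * c, ws)) L" using y by (simp add: L_def)
    have S: "vs t [(Aprod ys, [(e,p,w)])] \<xi> = (\<lambda>j. Aprod ys * X e t p w \<xi> j)" by (simp add: vs_Cons)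
    show ?thesis unfolding LE vs_append vs_scale S by (simp add: add.assoc)
  qed
  have 3: "Aprod ((e,p,w) # ys) = l2_inner p w * Aprod ys" using y by simp
  have "P t ((e,p,w) # ys) \<xi> = (\<lambda>j. vs t (Lexp ((e,p,w) # ys)) \<xi> j + Aprod ((e,p,w) # ys) * \<xi> j)"
    by (rule trans[OF 1]) (unfold 2 3, simp add: algebra_simps)
  then show ?case unfolding y .
qed

lemma prod_m1_expand: "0 \<le> t \<Longrightarrow> vecs_ok' ys \<Longrightarrow> \<xi> \<in> l2 \<Longrightarrow> prod_m1 U 0 t ys \<xi> = vs t (Lexp ys) \<xi>"
  unfolding prod_m1_def using P_expand[of t ys \<xi>] by (simp add: Aprod_def)

end



lemma tensor_add1: "tensor (\<lambda>i. f i + g i) \<omega> = (\<lambda>p. tensor f \<omega> p + tensor g \<omega> p)"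
  by (auto simp: tensor_def distrib_right)

lemma tensor_scale1: "tensor (\<lambda>i. c * f i) \<omega> = (\<lambda>p. c * tensor f \<omega> p)"
  by (auto simp: tensor_def)

lemma swap_norm: assumes "F \<in> l2" shows "l2_norm (\<lambda>(x,y). F (y,x)) = l2_norm F"
proof -
  have "(l2_norm (\<lambda>(x,y). F (y,x)))\<^sup>2 = (l2_norm F)\<^sup>2"
    using l2_norm_sq_inner[OF swap_l2[OF assms]] l2_norm_sq_inner[OF assms] swap_inner[of F F] by simp
  then show ?thesis using l2_norm_nonneg[of "\<lambda>(x,y). F (y,x)"] l2_norm_nonneg[of F] by (simp add: power2_eq_iff_nonneg)
qed

lemma contr2_add: assumes "\<omega> \<in> l2" "F \<in> l2" "G \<in> l2"
  shows "contr2 \<omega> (\<lambda>p. F p + G p) = (\<lambda>a. contr2 \<omega> F a + contr2 \<omega> G a)"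
proof -
  have "(\<lambda>(x,y). (\<lambda>p. F p + G p) (y,x)) = (\<lambda>p. (\<lambda>(x,y). F (y,x)) p + (\<lambda>(x,y). G (y,x)) p)"
    by (auto simp: fun_eq_iff)
  then show ?thesis unfolding contr2_def
    using contr_add[OF assms(1) swap_l2[OF assms(2)] swap_l2[OF assms(3)]] by simp
qed

lemma contr2_scale: "contr2 \<omega> (\<lambda>p. c * F p) = (\<lambda>a. c * contr2 \<omega> F a)"
proof -
  have "(\<lambda>(x,y). (\<lambda>p. c * F p) (y,x)) = (\<lambda>p. c * (\<lambda>(x,y). F (y,x)) p)"
    by (auto simp: fun_eq_iff)
  then show ?thesis unfolding contr2_def using contr_scale by simp
qed

lemma contr2_norm: assumes "\<omega> \<in> l2" "F \<in> l2" shows "l2_norm (contr2 \<omega> F) \<le> l2_norm \<omega> * l2_norm F"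
  unfolding contr2_def using contr_norm[OF assms(1) swap_l2[OF assms(2)]] swap_norm[OF assms(2)] by simp

lemma sum_list_div: "(\<Sum>x\<leftarrow>L. f x) / (c::complex) = (\<Sum>x\<leftarrow>L. f x / c)"
  by (induction L) (auto simp: add_divide_distrib)

context evo begin

lemma Tsg_facts: assumes t: "0 \<le> t"
  shows "\<And>v. v \<in> l2 \<Longrightarrow> Tsg U \<Omega> t v \<in> l2"
    and "\<And>u v. u \<in> l2 \<Longrightarrow> v \<in> l2 \<Longrightarrow> l2_inner u (Tsg U \<Omega> t v) = l2_inner (tensor u \<Omega>) (U 0 t (tensor v \<Omega>))"
proof -
  have Ub: "bdd_op (U 0 t)" using unitary_bdd[OF U_unitary[OF t]] .
  define B where "B v = contr2 \<Omega> (U 0 t (tensor v \<Omega>))" for v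
  have Bl: "B v \<in> l2" if "v \<in> l2" for v unfolding B_def
    by (rule contr2_l2[OF Om bdd_l2[OF Ub tensor_l2[OF that Om]]])
  have Bb: "bdd_op B" unfolding bdd_op_def
  proof (intro conjI ballI allI)
    fix f :: "'a \<Rightarrow> complex" assume "f \<in> l2" then show "B f \<in> l2" by (rule Bl)
  next
    fix f g :: "'a \<Rightarrow> complex" assume f: "f \<in> l2" and g: "g \<in> l2"
    show "B (\<lambda>i. f i + g i) = (\<lambda>j. B f j + B g j)"
      unfolding B_def tensor_add1 bdd_add[OF Ub tensor_l2[OF f Om] tensor_l2[OF g Om]]
      by (rule contr2_add[OF Om bdd_l2[OF Ub tensor_l2[OF f Om]] bdd_l2[OF Ub tensor_l2[OF g Om]]])
  next
    fix f :: "'a \<Rightarrow> complex" and c assume f: "f \<in> l2"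
    show "B (\<lambda>i. c * f i) = (\<lambda>j. c * B f j)"
      unfolding B_def tensor_scale1 bdd_scale[OF Ub tensor_l2[OF f Om]] by (rule contr2_scale)
  next
    obtain C where C: "\<forall>f\<in>l2. l2_norm (U 0 t f) \<le> C * l2_norm f" using bdd_bound[OF Ub] by blast
    show "\<exists>C. \<forall>f\<in>l2. l2_norm (B f) \<le> C * l2_norm f"
    proof (intro exI ballI)
      fix f :: "'a \<Rightarrow> complex" assume f: "f \<in> l2"
      have "l2_norm (B f) \<le> l2_norm \<Omega> * l2_norm (U 0 t (tensor f \<Omega>))"
        unfolding B_def by (rule contr2_norm[OF Om bdd_l2[OF Ub tensor_l2[OF f Om]]])
      also have "\<dots> \<le> C * (l2_norm f * l2_norm \<Omega>)"
        using C[rule_format, OF tensor_l2[OF f Om]] tensor_norm[OF f Om] Om1 by simp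
      finally show "l2_norm (B f) \<le> C * l2_norm f" using Om1 by simp
    qed
  qed
  have fo: "expect \<Omega> (fact_op U False 0 t u v) = l2_inner (tensor u \<Omega>) (U 0 t (tensor v \<Omega>))"
    if "u \<in> l2" "v \<in> l2" for u v
    unfolding expect_def fact_op_def Ueps_def using partial_op_inner[OF Ub that Om Om] by simp
  have Bp: "\<forall>u\<in>l2. \<forall>v\<in>l2. l2_inner u (B v) = expect \<Omega> (fact_op U False 0 t u v)"
    unfolding B_def using contr2_inner[OF Om _ bdd_l2[OF Ub tensor_l2[OF _ Om]]] fo by simp
  have ex: "\<exists>B. bdd_op B \<and> (\<forall>u\<in>l2. \<forall>v\<in>l2. l2_inner u (B v) = expect \<Omega> (fact_op U False 0 t u v))"
    using Bb Bp by blast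
  have P: "bdd_op (Tsg U \<Omega> t) \<and> (\<forall>u\<in>l2. \<forall>v\<in>l2. l2_inner u (Tsg U \<Omega> t v) = expect \<Omega> (fact_op U False 0 t u v))"
    unfolding Tsg_def by (rule someI_ex[OF ex])
  show "\<And>v. v \<in> l2 \<Longrightarrow> Tsg U \<Omega> t v \<in> l2" using P bdd_l2 by blast
  show "\<And>u v. u \<in> l2 \<Longrightarrow> v \<in> l2 \<Longrightarrow> l2_inner u (Tsg U \<Omega> t v) = l2_inner (tensor u \<Omega>) (U 0 t (tensor v \<Omega>))"
    using P fo by simp
qed

lemma Om_inner: "l2_inner \<Omega> \<Omega> = 1"
  using inner_self[OF Om] Om1 by simp

lemma domG_bound: assumes "v \<in> domG U \<Omega>"
  shows "\<exists>K. \<forall>\<^sub>F t in at_right 0. 0 < t \<and> l2_norm (\<lambda>i. Tsg U \<Omega> t v i - v i) \<le> K * t"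
proof -
  obtain g where v: "v \<in> l2" and g: "g \<in> l2"
    and lim: "((\<lambda>t. l2_norm (\<lambda>i. (Tsg U \<Omega> t v i - v i) / complex_of_real t - g i)) \<longlongrightarrow> 0) (at_right 0)"
    using assms unfolding domG_def by blast
  have ev1: "\<forall>\<^sub>F t in at_right 0. l2_norm (\<lambda>i. (Tsg U \<Omega> t v i - v i) / complex_of_real t - g i) < 1"
    using order_tendstoD(2)[OF lim, of 1] by simp
  have ev2: "\<forall>\<^sub>F t in at_right (0::real). 0 < t" by (rule eventually_at_right_less)
  show ?thesis
  proof (intro exI, rule eventually_mono[OF eventually_conj[OF ev1 ev2]], elim conjE, intro conjI)
    fix t :: real assume n: "l2_norm (\<lambda>i. (Tsg U \<Omega> t v i - v i) / complex_of_real t - g i) < 1" and t: "0 < t"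
    then show "0 < t" by simp
    define h where "h = (\<lambda>i. Tsg U \<Omega> t v i - v i)"
    have hl: "h \<in> l2" unfolding h_def by (rule l2_diff[OF Tsg_facts(1)[OF _ v] v]) (use t in simp)
    define q where "q = (\<lambda>i. h i / complex_of_real t - g i)"
    have hs: "(\<lambda>i. h i / complex_of_real t) \<in> l2" using l2_scale[OF hl, of "1 / complex_of_real t"] by simp
    have ql: "q \<in> l2" unfolding q_def by (rule l2_diff[OF hs g])
    have "(\<lambda>i. h i / complex_of_real t) = (\<lambda>i. q i + g i)" by (simp add: q_def)
    then have "l2_norm (\<lambda>i. h i / complex_of_real t) \<le> l2_norm q + l2_norm g"
      using l2_norm_triangle[OF ql g] by simp
    also have "\<dots> \<le> 1 + l2_norm g" using n by (simp add: q_def h_def)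
    finally have a: "l2_norm (\<lambda>i. h i / complex_of_real t) \<le> 1 + l2_norm g" .
    have "h = (\<lambda>i. complex_of_real t * (h i / complex_of_real t))" using t by auto
    then have "l2_norm h = t * l2_norm (\<lambda>i. h i / complex_of_real t)"
      using l2_norm_scale[OF hs, of "complex_of_real t"] t by simp
    also have "\<dots> \<le> t * (1 + l2_norm g)" using a t by simp
    finally show "l2_norm (\<lambda>i. Tsg U \<Omega> t v i - v i) \<le> (1 + l2_norm g) * t" by (simp add: h_def mult.commute)
  qed
qed

lemma DvO_bound: assumes v: "v \<in> l2" and t: "0 < t"
  shows "(l2_norm (Dm False t (tensor v \<Omega>)))\<^sup>2 \<le> 2 * (l2_norm v * l2_norm (\<lambda>i. Tsg U \<Omega> t v i - v i))"
proof -
  have t0: "0 \<le> t" using t by simp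
  have vO: "tensor v \<Omega> \<in> l2" by (rule tensor_l2[OF v Om])
  have Tl: "Tsg U \<Omega> t v \<in> l2" by (rule Tsg_facts(1)[OF t0 v])
  have "l2_inner (tensor v \<Omega>) (Dm False t (tensor v \<Omega>))
      = l2_inner (tensor v \<Omega>) (W False t (tensor v \<Omega>)) - l2_inner (tensor v \<Omega>) (tensor v \<Omega>)"
    unfolding Dm_app by (rule inner_diff_right[OF vO W_l2[OF t0 vO] vO])
  also have "\<dots> = l2_inner v (Tsg U \<Omega> t v) - l2_inner v v"
    using Tsg_facts(2)[OF t0 v v] tensor_inner[OF v Om v Om] Om_inner by (simp add: W_def Ueps_def)
  also have "\<dots> = l2_inner v (\<lambda>i. Tsg U \<Omega> t v i - v i)" by (rule inner_diff_right[OF v Tl v, symmetric])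
  finally have e: "l2_inner (tensor v \<Omega>) (Dm False t (tensor v \<Omega>)) = l2_inner v (\<lambda>i. Tsg U \<Omega> t v i - v i)" .
  have "(l2_norm (Dm False t (tensor v \<Omega>)))\<^sup>2 = - 2 * Re (l2_inner (tensor v \<Omega>) (Dm False t (tensor v \<Omega>)))"
    by (rule Dm_norm_sq[OF t0 vO])
  also have "\<dots> \<le> 2 * cmod (l2_inner v (\<lambda>i. Tsg U \<Omega> t v i - v i))" unfolding e by (rule neg_Re_le)
  also have "\<dots> \<le> 2 * (l2_norm v * l2_norm (\<lambda>i. Tsg U \<Omega> t v i - v i))"
    using cauchy_schwarz[OF v l2_diff[OF Tl v]] by simp
  finally show ?thesis .
qed

lemma inner_Xw: "0 \<le> t \<Longrightarrow> vecs_ok' w1 \<Longrightarrow> vecs_ok' w2 \<Longrightarrow>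
    l2_inner (Xw t w1 \<Omega>) (Xw t w2 \<Omega>) = expect \<Omega> (Xw t (adjw w1 @ w2))"
  using Xw_adj[OF _ _ Om Xw_l2[OF _ _ Om]] by (simp add: expect_def Xw_append)

lemma inner_vs: assumes t: "0 \<le> t" and L1: "Lok L1" and L2: "Lok L2"
  shows "l2_inner (vs t L1 \<Omega>) (vs t L2 \<Omega>) =
    (\<Sum>x1\<leftarrow>L1. \<Sum>x2\<leftarrow>L2. cnj (fst x1) * fst x2 * expect \<Omega> (Xw t (adjw (snd x1) @ snd x2)))"
proof -
  have tl: "\<And>L x. Lok L \<Longrightarrow> x \<in> set L \<Longrightarrow> (case x of (c, ws) \<Rightarrow> (\<lambda>j. c * Xw t ws \<Omega> j)) \<in> l2"
    using t Om by (auto simp: Lok_def intro!: l2_scale Xw_l2 split: prod.split)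
  have "l2_inner (vs t L1 \<Omega>) (vs t L2 \<Omega>) = (\<Sum>x1\<leftarrow>L1. l2_inner (case x1 of (c, ws) \<Rightarrow> (\<lambda>j. c * Xw t ws \<Omega> j)) (vs t L2 \<Omega>))"
    unfolding vs_def[of t L1] by (rule inner_sum_list_left[OF tl[OF L1] vs_l2[OF t L2 Om]])
  also have "\<dots> = (\<Sum>x1\<leftarrow>L1. \<Sum>x2\<leftarrow>L2. cnj (fst x1) * fst x2 * expect \<Omega> (Xw t (adjw (snd x1) @ snd x2)))"
  proof (rule arg_cong[where f=sum_list], rule map_cong[OF refl])
    fix x1 assume x1: "x1 \<in> set L1"
    obtain c1 w1 where x1e: "x1 = (c1, w1)" by (cases x1)
    have w1: "vecs_ok' w1" using L1 x1 x1e by (auto simp: Lok_def)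
    have "l2_inner (case x1 of (c, ws) \<Rightarrow> (\<lambda>j. c * Xw t ws \<Omega> j)) (vs t L2 \<Omega>)
        = (\<Sum>x2\<leftarrow>L2. l2_inner (case x1 of (c, ws) \<Rightarrow> (\<lambda>j. c * Xw t ws \<Omega> j)) (case x2 of (c, ws) \<Rightarrow> (\<lambda>j. c * Xw t ws \<Omega> j)))"
      unfolding vs_def[of t L2] by (rule inner_sum_list_right[OF tl[OF L2] tl[OF L1 x1]])
    also have "\<dots> = (\<Sum>x2\<leftarrow>L2. cnj (fst x1) * fst x2 * expect \<Omega> (Xw t (adjw (snd x1) @ snd x2)))"
    proof (rule arg_cong[where f=sum_list], rule map_cong[OF refl])
      fix x2 assume x2: "x2 \<in> set L2"
      obtain c2 w2 where x2e: "x2 = (c2, w2)" by (cases x2)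
      have w2: "vecs_ok' w2" using L2 x2 x2e by (auto simp: Lok_def)
      show "l2_inner (case x1 of (c, ws) \<Rightarrow> (\<lambda>j. c * Xw t ws \<Omega> j)) (case x2 of (c, ws) \<Rightarrow> (\<lambda>j. c * Xw t ws \<Omega> j))
          = cnj (fst x1) * fst x2 * expect \<Omega> (Xw t (adjw (snd x1) @ snd x2))"
        using inner_Xw[OF t w1 w2] x1e x2e by (simp add: inner_scale_left inner_scale_right)
    qed
    finally show "l2_inner (case x1 of (c, ws) \<Rightarrow> (\<lambda>j. c * Xw t ws \<Omega> j)) (vs t L2 \<Omega>)
        = (\<Sum>x2\<leftarrow>L2. cnj (fst x1) * fst x2 * expect \<Omega> (Xw t (adjw (snd x1) @ snd x2)))" .
  qed
  finally show ?thesis .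
qed

lemma Q_lim:
  assumes CC: "C U \<Omega>" and u: "u \<in> l2" and ok: "vecs_ok' ys"
  shows "((\<lambda>t. l2_inner (prod_m1 U 0 t ys \<Omega>) (X False t u u (prod_m1 U 0 t ys \<Omega>)) / complex_of_real t) \<longlongrightarrow> 0) (at_right 0)"
proof -
  define L where "L = Lexp ys"
  have L: "Lok L" unfolding L_def by (rule Lok_Lexp[OF ok])
  define L' where "L' = map (\<lambda>(c,ws). (c, (False,u,u) # ws)) L"
  have L': "Lok L'" using L u unfolding L'_def Lok_def by auto
  have eq: "l2_inner (prod_m1 U 0 t ys \<Omega>) (X False t u u (prod_m1 U 0 t ys \<Omega>)) / complex_of_real t
      = (\<Sum>x1\<leftarrow>L. \<Sum>x2\<leftarrow>L'. cnj (fst x1) * fst x2 * (expect \<Omega> (Xw t (adjw (snd x1) @ snd x2)) / complex_of_real t))"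
    if t: "0 < t" for t
  proof -
    have t0: "0 \<le> t" using t by simp
    have "l2_inner (prod_m1 U 0 t ys \<Omega>) (X False t u u (prod_m1 U 0 t ys \<Omega>)) = l2_inner (vs t L \<Omega>) (vs t L' \<Omega>)"
      unfolding prod_m1_expand[OF t0 ok Om] L_def[symmetric] L'_def X_vs[OF t0 u u Om L] ..
    also have "\<dots> = (\<Sum>x1\<leftarrow>L. \<Sum>x2\<leftarrow>L'. cnj (fst x1) * fst x2 * expect \<Omega> (Xw t (adjw (snd x1) @ snd x2)))"
      by (rule inner_vs[OF t0 L L'])
    finally show ?thesis by (simp add: sum_list_div)
  qed
  have lim: "((\<lambda>t. \<Sum>x1\<leftarrow>L. \<Sum>x2\<leftarrow>L'. cnj (fst x1) * fst x2 * (expect \<Omega> (Xw t (adjw (snd x1) @ snd x2)) / complex_of_real t)) \<longlongrightarrow> 0) (at_right 0)"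
  proof (rule tendsto_sum_list_zero, rule tendsto_sum_list_zero)
    fix x1 x2 assume x1: "x1 \<in> set L" and x2: "x2 \<in> set L'"
    obtain c1 w1 where x1e: "x1 = (c1, w1)" by (cases x1)
    obtain c2 w2 where x2e: "x2 = (c2, w2)" by (cases x2)
    have w1: "vecs_ok' w1" "w1 \<noteq> []" using Lexp_words[of c1 w1 ys] Lexp_ok[OF ok, of c1 w1] x1 x1e L_def by auto
    obtain c2' w2' where "(c2', w2') \<in> set L" "x2 = (c2', (False,u,u) # w2')" using x2 unfolding L'_def by auto
    then have w2: "vecs_ok' w2" "w2 \<noteq> []" using L u x2e by (auto simp: Lok_def)
    have "3 \<le> length (adjw w1 @ w2)"
    proof -
      have "w2' \<noteq> []" using \<open>(c2', w2') \<in> set L\<close> Lexp_words[of c2' w2' ys] L_def by auto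
      then have "2 \<le> length w2" using \<open>x2 = (c2', (False,u,u) # w2')\<close> x2e by (cases w2') auto
      moreover have "1 \<le> length w1" using w1(2) by (cases w1) auto
      ultimately show ?thesis by simp
    qed
    then have "((\<lambda>t. expect \<Omega> (Xw t (adjw w1 @ w2)) / complex_of_real t) \<longlongrightarrow> 0) (at_right 0)"
      by (intro part_i[OF CC]) (use w1 w2 adjw_ok in auto)
    then show "((\<lambda>t. cnj (fst x1) * fst x2 * (expect \<Omega> (Xw t (adjw (snd x1) @ snd x2)) / complex_of_real t)) \<longlongrightarrow> 0) (at_right 0)"
      using x1e x2e tendsto_mult_right_zero by fastforce
  qed
  show ?thesis
    by (rule tendsto_cong[THEN iffD2, OF _ lim]) (use eq eventually_at_right_less[of 0] in \<open>auto elim!: eventually_mono\<close>)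
qed

lemma sum_lim:
  assumes CC: "C U \<Omega>" and u: "u \<in> l2" and vG: "v \<in> domG U \<Omega>" and ok: "vecs_ok' ys"
  shows "((\<lambda>t. l2_inner (X True t u v \<Omega>) (prod_m1 U 0 t ys \<Omega>) / complex_of_real t
              + l2_inner (X False t u v \<Omega>) (prod_m1 U 0 t ys \<Omega>) / complex_of_real t) \<longlongrightarrow> 0) (at_right 0)"
proof -
  have v: "v \<in> l2" using vG by (simp add: domG_def)
  obtain K where evK: "\<forall>\<^sub>F t in at_right 0. 0 < t \<and> l2_norm (\<lambda>i. Tsg U \<Omega> t v i - v i) \<le> K * t"
    using domG_bound[OF vG] by blast
  define S where "S t = l2_inner (X True t u v \<Omega>) (prod_m1 U 0 t ys \<Omega>) / complex_of_real t
              + l2_inner (X False t u v \<Omega>) (prod_m1 U 0 t ys \<Omega>) / complex_of_real t" for t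
  define Q where "Q t = l2_inner (prod_m1 U 0 t ys \<Omega>) (X False t u u (prod_m1 U 0 t ys \<Omega>)) / complex_of_real t" for t
  have bound: "(cmod (S t))\<^sup>2 \<le> (4 * l2_norm v * K) * cmod (Q t)"
    if t: "0 < t" and tb: "l2_norm (\<lambda>i. Tsg U \<Omega> t v i - v i) \<le> K * t" for t
  proof -
    have t0: "0 \<le> t" using t by simp
    define Y where "Y = prod_m1 U 0 t ys \<Omega>"
    have Yl: "Y \<in> l2" unfolding Y_def prod_m1_expand[OF t0 ok Om] by (rule vs_l2[OF t0 Lok_Lexp[OF ok] Om])
    have uY: "tensor u Y \<in> l2" by (rule tensor_l2[OF u Yl])
    have vO: "tensor v \<Omega> \<in> l2" by (rule tensor_l2[OF v Om])
    have a1: "l2_inner (X True t u v \<Omega>) Y = l2_inner (tensor v \<Omega>) (Dm False t (tensor u Y))"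
      using X_adj[OF t0 u v Om Yl, of True] X_inner[OF t0 v u Om Yl, of False] by simp
    have a2: "l2_inner (X False t u v \<Omega>) Y = l2_inner (tensor v \<Omega>) (Dm True t (tensor u Y))"
      using X_adj[OF t0 u v Om Yl, of False] X_inner[OF t0 v u Om Yl, of True] by simp
    have Se: "S t = - l2_inner (Dm False t (tensor v \<Omega>)) (Dm False t (tensor u Y)) / complex_of_real t"
      unfolding S_def Y_def[symmetric] a1 a2 Dm_ident[OF t0 vO uY, symmetric] by (simp add: add_divide_distrib)
    have cs: "cmod (l2_inner (Dm False t (tensor v \<Omega>)) (Dm False t (tensor u Y)))
        \<le> l2_norm (Dm False t (tensor v \<Omega>)) * l2_norm (Dm False t (tensor u Y))"
      by (rule cauchy_schwarz[OF Dm_l2[OF t0 vO] Dm_l2[OF t0 uY]])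
    have h: "2 * (l2_norm v * l2_norm (\<lambda>i. Tsg U \<Omega> t v i - v i)) \<le> 2 * l2_norm v * K * t"
      using mult_left_mono[OF tb l2_norm_nonneg[of v]] by (simp add: mult.assoc)
    have n1: "(l2_norm (Dm False t (tensor v \<Omega>)))\<^sup>2 \<le> 2 * l2_norm v * K * t"
      by (rule order_trans[OF DvO_bound[OF v t] h])
    have qe: "l2_inner (tensor u Y) (Dm False t (tensor u Y)) = Q t * complex_of_real t"
      using X_inner[OF t0 u u Yl Yl, of False] t by (simp add: Q_def Y_def)
    have n2: "(l2_norm (Dm False t (tensor u Y)))\<^sup>2 \<le> 2 * cmod (Q t) * t"
    proof -
      have "(l2_norm (Dm False t (tensor u Y)))\<^sup>2 = - 2 * Re (l2_inner (tensor u Y) (Dm False t (tensor u Y)))"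
        by (rule Dm_norm_sq[OF t0 uY])
      also have "\<dots> \<le> 2 * cmod (l2_inner (tensor u Y) (Dm False t (tensor u Y)))" by (rule neg_Re_le)
      also have "\<dots> = 2 * cmod (Q t) * t" unfolding qe using t by (simp add: norm_mult)
      finally show ?thesis .
    qed
    have "(cmod (l2_inner (Dm False t (tensor v \<Omega>)) (Dm False t (tensor u Y))))\<^sup>2
        \<le> (l2_norm (Dm False t (tensor v \<Omega>)))\<^sup>2 * (l2_norm (Dm False t (tensor u Y)))\<^sup>2"
      using power_mono[OF cs norm_ge_zero, of 2] by (simp add: power_mult_distrib)
    also have "\<dots> \<le> (2 * l2_norm v * K * t) * (2 * cmod (Q t) * t)"
      by (rule mult_mono[OF n1 n2 order_trans[OF zero_le_power2 n1] zero_le_power2])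
    finally have "(cmod (l2_inner (Dm False t (tensor v \<Omega>)) (Dm False t (tensor u Y))))\<^sup>2
        \<le> (4 * l2_norm v * K) * cmod (Q t) * t\<^sup>2" by (simp add: power2_eq_square ac_simps)
    then have "(cmod (l2_inner (Dm False t (tensor v \<Omega>)) (Dm False t (tensor u Y))))\<^sup>2 / t\<^sup>2
        \<le> (4 * l2_norm v * K) * cmod (Q t)" using t by (subst pos_divide_le_eq) auto
    then show ?thesis unfolding Se by (simp add: norm_divide power_divide)
  qed
  have Ql: "((\<lambda>t. (4 * l2_norm v * K) * cmod (Q t)) \<longlongrightarrow> 0) (at_right 0)"
    using tendsto_mult_right_zero[OF tendsto_norm_zero[OF Q_lim[OF CC u ok]], of "4 * l2_norm v * K"]
    by (simp add: Q_def)
  have sq: "((\<lambda>t. (cmod (S t))\<^sup>2) \<longlongrightarrow> 0) (at_right 0)"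
  proof (rule Lim_null_comparison[OF _ Ql])
    show "\<forall>\<^sub>F t in at_right 0. norm ((cmod (S t))\<^sup>2) \<le> 4 * l2_norm v * K * cmod (Q t)"
      using evK bound by (auto elim!: eventually_mono)
  qed
  have "((\<lambda>t. sqrt ((cmod (S t))\<^sup>2)) \<longlongrightarrow> sqrt 0) (at_right 0)" by (rule tendsto_real_sqrt[OF sq])
  then have "((\<lambda>t. cmod (S t)) \<longlongrightarrow> 0) (at_right 0)" by simp
  then have "(S \<longlongrightarrow> 0) (at_right 0)" by (rule tendsto_norm_zero_cancel)
  then show ?thesis unfolding S_def[abs_def] .
qed

end

theorem lemma3p4:
  fixes U :: "('a::countable, 'b::countable) evol" and \<Omega> :: "'b \<Rightarrow> complex"
  assumes unitary: "unitary_family U"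
    and Omega: "\<Omega> \<in> l2" "l2_norm \<Omega> = 1"
    and "A1 U" and "A2i U" and "A2ii U \<Omega>" and "A3 U \<Omega>" and "B' U \<Omega>" and "C U \<Omega>"
  shows "(\<forall>xs. 3 \<le> length xs \<longrightarrow> vecs_ok' xs \<longrightarrow>
            ((\<lambda>t. expect \<Omega> (foldr (\<lambda>(e, u, v) X. fact_m1 U e 0 t u v \<circ> X) xs id)
                  / complex_of_real t) \<longlongrightarrow> 0) (at_right 0))
       \<and> (\<forall>u v e ys. u \<in> l2 \<longrightarrow> v \<in> domG U \<Omega> \<longrightarrow> ys \<noteq> [] \<longrightarrow> vecs_ok' ys \<longrightarrow>
            (\<forall>L. ((\<lambda>t. l2_inner (fact_m1 U e 0 t u v \<Omega>) (prod_m1 U 0 t ys \<Omega>) / complex_of_real t)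
                     \<longlongrightarrow> (if e then - L else L)) (at_right 0)
               \<longleftrightarrow> ((\<lambda>t. l2_inner (fact_m1 U False 0 t u v \<Omega>) (prod_m1 U 0 t ys \<Omega>) / complex_of_real t)
                     \<longlongrightarrow> L) (at_right 0)))"
proof -
  interpret evo U \<Omega> using unitary Omega by unfold_locales
  have CC: "C U \<Omega>" by fact
  show ?thesis
  proof (intro conjI allI impI)
    fix xs :: "(bool \<times> ('a \<Rightarrow> complex) \<times> ('a \<Rightarrow> complex)) list"
    assume "3 \<le> length xs" "vecs_ok' xs"
    then show "((\<lambda>t. expect \<Omega> (foldr (\<lambda>(e, u, v) X. fact_m1 U e 0 t u v \<circ> X) xs id)
                  / complex_of_real t) \<longlongrightarrow> 0) (at_right 0)"
      using part_i[OF CC] by (simp add: Xw_def)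
  next
    fix u v :: "'a \<Rightarrow> complex" and e :: bool and ys :: "(bool \<times> ('a \<Rightarrow> complex) \<times> ('a \<Rightarrow> complex)) list" and L :: complex
    assume u: "u \<in> l2" and vG: "v \<in> domG U \<Omega>" and "ys \<noteq> []" and ok: "vecs_ok' ys"
    define fT where "fT = (\<lambda>t. l2_inner (fact_m1 U True 0 t u v \<Omega>) (prod_m1 U 0 t ys \<Omega>) / complex_of_real t)"
    define fF where "fF = (\<lambda>t. l2_inner (fact_m1 U False 0 t u v \<Omega>) (prod_m1 U 0 t ys \<Omega>) / complex_of_real t)"
    have S: "((\<lambda>t. fT t + fF t) \<longlongrightarrow> 0) (at_right 0)"
      unfolding fT_def fF_def using sum_lim[OF CC u vG ok] by simp
    show "((\<lambda>t. l2_inner (fact_m1 U e 0 t u v \<Omega>) (prod_m1 U 0 t ys \<Omega>) / complex_of_real t)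
                     \<longlongrightarrow> (if e then - L else L)) (at_right 0)
               \<longleftrightarrow> ((\<lambda>t. l2_inner (fact_m1 U False 0 t u v \<Omega>) (prod_m1 U 0 t ys \<Omega>) / complex_of_real t)
                     \<longlongrightarrow> L) (at_right 0)"
    proof (cases e)
      case False then show ?thesis by simp
    next
      case True
      have "(fT \<longlongrightarrow> - L) (at_right 0) \<longleftrightarrow> (fF \<longlongrightarrow> L) (at_right 0)"
      proof
        assume a: "(fT \<longlongrightarrow> - L) (at_right 0)"
        have "((\<lambda>t. (fT t + fF t) - fT t) \<longlongrightarrow> 0 - (- L)) (at_right 0)" by (rule tendsto_diff[OF S a])
        then show "(fF \<longlongrightarrow> L) (at_right 0)" by simp
      next
        assume a: "(fF \<longlongrightarrow> L) (at_right 0)"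
        have "((\<lambda>t. (fT t + fF t) - fF t) \<longlongrightarrow> 0 - L) (at_right 0)" by (rule tendsto_diff[OF S a])
        then show "(fT \<longlongrightarrow> - L) (at_right 0)" by simp
      qed
      then show ?thesis using True unfolding fT_def fF_def by simp
    qed
  qed
qed


end
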